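(* If $f\in\mathcal P_s$ and $g\in\mathcal P_r$, then $\{f,g\}\in\mathcal P_{r+s-2}$, and $$ \|\{f,g\}\|_+\le 2^4\,\Omega\,r\,s\,\min(r,s)\,\|f\|_+\|g\|_+ , $$ where $\Omega=\sqrt{2K(m_1+m_2)/(m_1m_2)}$.
   Context: Normal modes of a diatomic chain of $N$ cells with masses $m_1>m_2>0$ and harmonic constant $K>0$: let $\mathcal K_N=\{\lfloor-N/2\rfloor+1,\dots,\lfloor N/2\rfloor\}$; for $k\in\mathcal K_N$, $\kappa=2\pi k/N$, $\Delta_k=m_1^2+m_2^2+2m_1m_2\cos\kappa$, $\omega_k^\pm=\big(K\frac{m_1+m_2\pm\sqrt{\Delta_k}}{m_1m_2}\big)^{1/2}$, $\Omega=\omega_0^+$. The complex normal-mode coordinates $\hat q_k^l,\hat p_k^l$ ($k\in\mathcal K_N$, $l=\pm$) are canonical, $\{\hat q_k^l,\hat p_{k'}^{l'}\}=\delta_{k,k'}\delta_{l,l'}$, with $\hat q^l_{-k}=\overline{\hat q^l_k}$, $\hat p^l_{-k}=\overline{\hat p^l_k}$ (indices $k$ taken mod $N$ in $\mathcal K_N$). Polynomial classes. Put $\xi_k^l=(\hat p_k^l+i\omega_k^l\hat q_{-k}^l)/\sqrt2$, $\eta_k^l=(\hat p_{-k}^l-i\omega_k^l\hat q_k^l)/\sqrt2$, so that $\{\xi_k^l,\eta_{k'}^{l'}\}=i\omega_k^l\delta_{k,k'}\delta_{l,l'}$. For $\sigma\in\{\pm1\}^s$, $k\in\mathcal K_N^s$,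 $l\in\{+,-\}^s$ let $\Xi^s_{\sigma,k,l}=\prod_{j=1}^s(\xi^{l_j}_{k_j})^{(1+\sigma_j)/2}(\eta^{l_j}_{k_j})^{(1-\sigma_j)/2}$. Let $\mathcal I_s$ be the set of tuples $(\sigma,\tilde\tau,k,l,n)$ with $\sigma,\tilde\tau\in\{\pm1\}^s$, $k\in\mathcal K_N^s$, $l\in\{+,-\}^s$, $n\in\mathbb Z$ with $\lfloor-(s-1)/2\rfloor\le n\le\lfloor(s-1)/2\rfloor$, and write $\delta^n_j=\delta_{j,nN}$. $\mathcal P_s$ is the space of functions of the form $f=N^{-(s-2)/2}\sum_{(\sigma,\tilde\tau,k,l,n)\in\mathcal I_s}f_{\sigma,\tilde\tau,l,n}\big(\tfrac{k_1}N,\dots,\tfrac{k_s}N\big)\,\Xi^s_{\sigma,k,l}\,\delta^n_{\tilde\tau\cdot k}$ with continuous coefficient functions $f_{\sigma,\tilde\tau,l,n}:[-1,1]^s\to\mathbb C$, normed by $\|f\|_+=\max_{(\sigma,\tilde\tau,k,l,n)\in\mathcal I_s}\big|f_{\sigma,\tilde\tau,l,n}(k_1/N,\dots,k_s/N)\big|\,\delta^n_{\tilde\tau\cdot k}$. *)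

theory Defs
  imports "HOL-Analysis.Analysis"
begin

text \<open>Diatomic chain of N cells, masses m1 > m2 > 0, spring constant K > 0.
  Phase-space coordinates: the complex normal-mode coordinates q_k^l, p_k^l
  (k in K_N, l = + (True) or - (False)).  Functions are modelled as functions
  of the independent complex variables (holomorphic extension); the reality
  conditions cut out a totally real subspace on which polynomials are
  determined, and the canonical Poisson bracket is computed with complex
  partial derivatives.\<close>

datatype var = Qv int bool | Pv int bool

type_synonym point = "var \<Rightarrow> complex"

definition KN_lo :: "nat \<Rightarrow> int" where "KN_lo N = (- int N) div 2 + 1"
definition KN_hi :: "nat \<Rightarrow> int" where "KN_hi N = int N div 2"
definition KN :: "nat \<Rightarrow> int set" where "KN N = {KN_lo N .. KN_hi N}"

definition red :: "nat \<Rightarrow> int \<Rightarrow> int" where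
  "red N k = (k - KN_lo N) mod int N + KN_lo N"

definition Delta :: "real \<Rightarrow> real \<Rightarrow> nat \<Rightarrow> int \<Rightarrow> real" where
  "Delta m1 m2 N k = m1\<^sup>2 + m2\<^sup>2 + 2 * m1 * m2 * cos (2 * pi * real_of_int k / real N)"

definition omega :: "real \<Rightarrow> real \<Rightarrow> real \<Rightarrow> nat \<Rightarrow> bool \<Rightarrow> int \<Rightarrow> real" where
  "omega K m1 m2 N l k =
     sqrt (K * (m1 + m2 + (if l then 1 else -1) * sqrt (Delta m1 m2 N k)) / (m1 * m2))"

definition xi :: "real \<Rightarrow> real \<Rightarrow> real \<Rightarrow> nat \<Rightarrow> bool \<Rightarrow> int \<Rightarrow> point \<Rightarrow> complex" where
  "xi K m1 m2 N l k z =
     (z (Pv k l) + \<i> * complex_of_real (omega K m1 m2 N l k) * z (Qv (red N (- k)) l))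
       / complex_of_real (sqrt 2)"

definition eta :: "real \<Rightarrow> real \<Rightarrow> real \<Rightarrow> nat \<Rightarrow> bool \<Rightarrow> int \<Rightarrow> point \<Rightarrow> complex" where
  "eta K m1 m2 N l k z =
     (z (Pv (red N (- k)) l) - \<i> * complex_of_real (omega K m1 m2 N l k) * z (Qv k l))
       / complex_of_real (sqrt 2)"

definition pd :: "var \<Rightarrow> (point \<Rightarrow> complex) \<Rightarrow> point \<Rightarrow> complex" where
  "pd v f z = deriv (\<lambda>t. f (z(v := t))) (z v)"

definition pbracket :: "nat \<Rightarrow> (point \<Rightarrow> complex) \<Rightarrow> (point \<Rightarrow> complex) \<Rightarrow> point \<Rightarrow> complex" where
  "pbracket N f g z =
     (\<Sum>k\<in>KN N. \<Sum>l\<in>(UNIV::bool set).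
        pd (Qv k l) f z * pd (Pv k l) g z - pd (Pv k l) f z * pd (Qv k l) g z)"

text \<open>Tuples of length s are functions on {..<s} (extensional).
  sigma j = True means sigma_j = +1; tau likewise; l j = True means l_j = +.\<close>

definition Xi :: "real \<Rightarrow> real \<Rightarrow> real \<Rightarrow> nat \<Rightarrow> nat \<Rightarrow> (nat \<Rightarrow> bool) \<Rightarrow> (nat \<Rightarrow> int)
                  \<Rightarrow> (nat \<Rightarrow> bool) \<Rightarrow> point \<Rightarrow> complex" where
  "Xi K m1 m2 N s \<sigma> k l z =
     (\<Prod>j<s. if \<sigma> j then xi K m1 m2 N (l j) (k j) z else eta K m1 m2 N (l j) (k j) z)"

definition tdot :: "nat \<Rightarrow> (nat \<Rightarrow> bool) \<Rightarrow> (nat \<Rightarrow> int) \<Rightarrow> int" where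
  "tdot s \<tau> k = (\<Sum>j<s. (if \<tau> j then 1 else -1) * k j)"

definition nlo :: "nat \<Rightarrow> int" where "nlo s = \<lfloor>- (real s - 1) / 2\<rfloor>"
definition nhi :: "nat \<Rightarrow> int" where "nhi s = \<lfloor>(real s - 1) / 2\<rfloor>"

definition signs :: "nat \<Rightarrow> (nat \<Rightarrow> bool) set" where
  "signs s = {..<s} \<rightarrow>\<^sub>E (UNIV :: bool set)"

definition ktuples :: "nat \<Rightarrow> nat \<Rightarrow> (nat \<Rightarrow> int) set" where
  "ktuples N s = {..<s} \<rightarrow>\<^sub>E KN N"

definition kvec :: "nat \<Rightarrow> nat \<Rightarrow> (nat \<Rightarrow> int) \<Rightarrow> (nat \<Rightarrow> real)" where
  "kvec N s k = (\<lambda>j. if j < s then real_of_int (k j) / real N else undefined)"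

definition cube :: "nat \<Rightarrow> (nat \<Rightarrow> real) set" where
  "cube s = {..<s} \<rightarrow>\<^sub>E {-1..1}"

type_synonym coeffs = "(nat \<Rightarrow> bool) \<Rightarrow> (nat \<Rightarrow> bool) \<Rightarrow> (nat \<Rightarrow> bool) \<Rightarrow> int \<Rightarrow> (nat \<Rightarrow> real) \<Rightarrow> complex"

definition is_coeffs :: "nat \<Rightarrow> coeffs \<Rightarrow> bool" where
  "is_coeffs s F \<longleftrightarrow> (\<forall>\<sigma> \<tau> l n. continuous_on (cube s) (F \<sigma> \<tau> l n))"

definition delta_n :: "nat \<Rightarrow> int \<Rightarrow> int \<Rightarrow> real" where
  "delta_n N n j = (if j = n * int N then 1 else 0)"

definition polyP :: "real \<Rightarrow> real \<Rightarrow> real \<Rightarrow> nat \<Rightarrow> nat \<Rightarrow> coeffs \<Rightarrow> point \<Rightarrow> complex" where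
  "polyP K m1 m2 N s F z =
     complex_of_real (real N powr (- (real s - 2) / 2)) *
     (\<Sum>\<sigma>\<in>signs s. \<Sum>\<tau>\<in>signs s. \<Sum>k\<in>ktuples N s. \<Sum>l\<in>signs s. \<Sum>n\<in>{nlo s .. nhi s}.
        F \<sigma> \<tau> l n (kvec N s k) * Xi K m1 m2 N s \<sigma> k l z
          * complex_of_real (delta_n N n (tdot s \<tau> k)))"

definition normplus :: "nat \<Rightarrow> nat \<Rightarrow> coeffs \<Rightarrow> real" where
  "normplus N s F = Max (insert 0
     ((\<lambda>(\<sigma>, \<tau>, k, l, n). cmod (F \<sigma> \<tau> l n (kvec N s k)) * delta_n N n (tdot s \<tau> k))
        ` (signs s \<times> signs s \<times> ktuples N s \<times> signs s \<times> {nlo s .. nhi s})))"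

definition in_P :: "real \<Rightarrow> real \<Rightarrow> real \<Rightarrow> nat \<Rightarrow> nat \<Rightarrow> (point \<Rightarrow> complex) \<Rightarrow> bool" where
  "in_P K m1 m2 N s f \<longleftrightarrow> (\<exists>F. is_coeffs s F \<and> f = polyP K m1 m2 N s F)"

end

theory Submission
  imports Defs
begin


definition hol :: "(point \<Rightarrow> complex) \<Rightarrow> bool" where
  "hol f \<longleftrightarrow> (\<forall>z v. (\<lambda>t. f (z(v:=t))) field_differentiable (at (z v)))"

lemma hol_const[simp]: "hol (\<lambda>z. c)"
  by (simp add: hol_def)

lemma hol_coord[simp]: "hol (\<lambda>z. z w)"
  unfolding hol_def
proof (intro allI)
  fix z :: point and v
  show "(\<lambda>t. (z(v:=t)) w) field_differentiable (at (z v))"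
    by (cases "v = w") (auto intro: field_differentiable_ident field_differentiable_const)
qed

lemma hol_add: "hol f \<Longrightarrow> hol g \<Longrightarrow> hol (\<lambda>z. f z + g z)"
  unfolding hol_def by (auto intro: field_differentiable_add)

lemma hol_diff: "hol f \<Longrightarrow> hol g \<Longrightarrow> hol (\<lambda>z. f z - g z)"
  unfolding hol_def by (auto intro: field_differentiable_diff)

lemma hol_mult: "hol f \<Longrightarrow> hol g \<Longrightarrow> hol (\<lambda>z. f z * g z)"
  unfolding hol_def by (auto intro: field_differentiable_mult)

lemma hol_cmult: "hol f \<Longrightarrow> hol (\<lambda>z. c * f z)"
  using hol_mult[OF hol_const] by blast

lemma hol_div: "hol f \<Longrightarrow> hol (\<lambda>z. f z / c)"
  using hol_mult[OF _ hol_const, of f "inverse c"] by (simp add: divide_inverse)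

lemma hol_sum: "(\<And>a. a \<in> A \<Longrightarrow> hol (f a)) \<Longrightarrow> hol (\<lambda>z. \<Sum>a\<in>A. f a z)"
proof (induction A rule: infinite_finite_induct)
  case (insert x F) then show ?case by (simp add: hol_add)
qed simp_all

lemma hol_prod: "(\<And>a. a \<in> A \<Longrightarrow> hol (f a)) \<Longrightarrow> hol (\<lambda>z. \<Prod>a\<in>A. f a z)"
proof (induction A rule: infinite_finite_induct)
  case (insert x F) then show ?case by (simp add: hol_mult)
qed simp_all

lemma pd_add: "hol f \<Longrightarrow> hol g \<Longrightarrow> pd v (\<lambda>z. f z + g z) z = pd v f z + pd v g z"
  unfolding hol_def pd_def by simp

lemma pd_mult: "hol f \<Longrightarrow> hol g \<Longrightarrow> pd v (\<lambda>z. f z * g z) z = pd v f z * g z + f z * pd v g z"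
  unfolding hol_def pd_def by simp

lemma pd_const[simp]: "pd v (\<lambda>z. c) z = 0"
  unfolding pd_def by simp

lemma pd_coord: "pd v (\<lambda>z. z w) z = (if v = w then 1 else 0)"
  unfolding pd_def by (cases "v = w") auto

lemma pd_cmult: "hol f \<Longrightarrow> pd v (\<lambda>z. c * f z) z = c * pd v f z"
  using pd_mult[OF hol_const, of f v c z] by simp

lemma pd_sum: "(\<And>a. a \<in> A \<Longrightarrow> hol (f a)) \<Longrightarrow> pd v (\<lambda>z. \<Sum>a\<in>A. f a z) z = (\<Sum>a\<in>A. pd v (f a) z)"
proof (induction A rule: infinite_finite_induct)
  case (insert x F)
  have "pd v (\<lambda>z. \<Sum>a\<in>insert x F. f a z) z = pd v (\<lambda>z. f x z + (\<Sum>a\<in>F. f a z)) z"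
    using insert by simp
  also have "\<dots> = pd v (f x) z + pd v (\<lambda>z. \<Sum>a\<in>F. f a z) z"
    using insert by (intro pd_add) (auto intro: hol_sum)
  finally show ?case using insert by simp
qed (simp_all)

lemma pd_prod: "finite A \<Longrightarrow> (\<And>a. a \<in> A \<Longrightarrow> hol (f a)) \<Longrightarrow>
   pd v (\<lambda>z. \<Prod>a\<in>A. f a z) z = (\<Sum>a\<in>A. pd v (f a) z * (\<Prod>b\<in>A-{a}. f b z))"
proof (induction A rule: finite_induct)
  case (insert x F)
  have "pd v (\<lambda>z. \<Prod>a\<in>insert x F. f a z) z = pd v (\<lambda>z. f x z * (\<Prod>a\<in>F. f a z)) z"
    using insert by simp
  also have "\<dots> = pd v (f x) z * (\<Prod>a\<in>F. f a z) + f x z * pd v (\<lambda>z. \<Prod>a\<in>F. f a z) z"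
    using insert by (intro pd_mult) (auto intro: hol_prod)
  also have "\<dots> = pd v (f x) z * (\<Prod>a\<in>F. f a z) + (\<Sum>a\<in>F. pd v (f a) z * (f x z * (\<Prod>b\<in>F-{a}. f b z)))"
    using insert by (simp add: sum_distrib_left algebra_simps)
  also have "\<dots> = (\<Sum>a\<in>insert x F. pd v (f a) z * (\<Prod>b\<in>insert x F-{a}. f b z))"
  proof -
    have "\<And>a. a \<in> F \<Longrightarrow> (\<Prod>b\<in>insert x F-{a}. f b z) = f x z * (\<Prod>b\<in>F-{a}. f b z)"
    proof -
      fix a assume "a \<in> F"
      then have "insert x F - {a} = insert x (F - {a})" using insert by auto
      then show "(\<Prod>b\<in>insert x F-{a}. f b z) = f x z * (\<Prod>b\<in>F-{a}. f b z)"
        using insert by simp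
    qed
    moreover have "insert x F - {x} = F" using insert by auto
    ultimately show ?thesis using insert by simp
  qed
  finally show ?case .
qed simp


lemma pd_lin: "finite A \<Longrightarrow> (\<And>a. a \<in> A \<Longrightarrow> hol (f a)) \<Longrightarrow>
  pd v (\<lambda>z. \<Sum>a\<in>A. c a * f a z) z = (\<Sum>a\<in>A. c a * pd v (f a) z)"
  by (subst pd_sum) (auto intro: hol_cmult simp: pd_cmult)

lemma swap4: "(\<Sum>k\<in>K. \<Sum>l\<in>L. \<Sum>a\<in>A. \<Sum>b\<in>B. F k l a b) = (\<Sum>a\<in>A. \<Sum>b\<in>B. \<Sum>k\<in>K. \<Sum>l\<in>L. F k l a b)"
proof -
  have 1: "(\<Sum>l\<in>L. \<Sum>a\<in>A. \<Sum>b\<in>B. F k l a b) = (\<Sum>a\<in>A. \<Sum>b\<in>B. \<Sum>l\<in>L. F k l a b)" for k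
  proof -
    have "(\<Sum>l\<in>L. \<Sum>a\<in>A. (\<Sum>b\<in>B. F k l a b)) = (\<Sum>a\<in>A. \<Sum>l\<in>L. \<Sum>b\<in>B. F k l a b)"
      by (rule sum.swap)
    also have "\<dots> = (\<Sum>a\<in>A. \<Sum>b\<in>B. \<Sum>l\<in>L. F k l a b)"
      by (rule sum.cong[OF refl], rule sum.swap)
    finally show ?thesis .
  qed
  have "(\<Sum>k\<in>K. \<Sum>l\<in>L. \<Sum>a\<in>A. \<Sum>b\<in>B. F k l a b) = (\<Sum>k\<in>K. \<Sum>a\<in>A. \<Sum>b\<in>B. \<Sum>l\<in>L. F k l a b)"
    by (simp only: 1)
  also have "\<dots> = (\<Sum>a\<in>A. \<Sum>k\<in>K. \<Sum>b\<in>B. \<Sum>l\<in>L. F k l a b)"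
    by (rule sum.swap)
  also have "\<dots> = (\<Sum>a\<in>A. \<Sum>b\<in>B. \<Sum>k\<in>K. \<Sum>l\<in>L. F k l a b)"
    by (rule sum.cong[OF refl], rule sum.swap)
  finally show ?thesis .
qed

lemma pb_bilin:
  assumes "finite A" "finite B" "\<And>a. a \<in> A \<Longrightarrow> hol (f a)" "\<And>b. b \<in> B \<Longrightarrow> hol (g b)"
  shows "pbracket N (\<lambda>z. \<Sum>a\<in>A. c a * f a z) (\<lambda>z. \<Sum>b\<in>B. d b * g b z) z
     = (\<Sum>a\<in>A. \<Sum>b\<in>B. c a * d b * pbracket N (f a) (g b) z)"
proof -
  have e1: "pd v (\<lambda>z. \<Sum>a\<in>A. c a * f a z) z = (\<Sum>a\<in>A. c a * pd v (f a) z)" for v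
    using assms by (intro pd_lin) auto
  have e2: "pd v (\<lambda>z. \<Sum>b\<in>B. d b * g b z) z = (\<Sum>b\<in>B. d b * pd v (g b) z)" for v
    using assms by (intro pd_lin) auto
  have "pbracket N (\<lambda>z. \<Sum>a\<in>A. c a * f a z) (\<lambda>z. \<Sum>b\<in>B. d b * g b z) z
    = (\<Sum>k\<in>KN N. \<Sum>l\<in>(UNIV::bool set). \<Sum>a\<in>A. \<Sum>b\<in>B. 
        c a * pd (Qv k l) (f a) z * (d b * pd (Pv k l) (g b) z) - c a * pd (Pv k l) (f a) z * (d b * pd (Qv k l) (g b) z))"
    unfolding pbracket_def e1 e2 sum_product sum_subtractf[symmetric] by (simp only: mult.assoc)
  also have "\<dots> = (\<Sum>k\<in>KN N. \<Sum>l\<in>(UNIV::bool set). \<Sum>a\<in>A. \<Sum>b\<in>B. c a * d b *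
        (pd (Qv k l) (f a) z * pd (Pv k l) (g b) z - pd (Pv k l) (f a) z * pd (Qv k l) (g b) z))"
    by (intro sum.cong refl) (simp add: algebra_simps)
  also have "\<dots> = (\<Sum>a\<in>A. \<Sum>b\<in>B. c a * d b * pbracket N (f a) (g b) z)"
    unfolding pbracket_def sum_distrib_left by (rule swap4)
  finally show ?thesis .
qed

lemma pb_prod:
  assumes "finite A" "finite B" "\<And>a. a \<in> A \<Longrightarrow> hol (f a)" "\<And>b. b \<in> B \<Longrightarrow> hol (g b)"
  shows "pbracket N (\<lambda>z. \<Prod>a\<in>A. f a z) (\<lambda>z. \<Prod>b\<in>B. g b z) z
     = (\<Sum>a\<in>A. \<Sum>b\<in>B. pbracket N (f a) (g b) z * (\<Prod>a'\<in>A-{a}. f a' z) * (\<Prod>b'\<in>B-{b}. g b' z))"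
proof -
  have e1: "pd v (\<lambda>z. \<Prod>a\<in>A. f a z) z = (\<Sum>a\<in>A. pd v (f a) z * (\<Prod>a'\<in>A-{a}. f a' z))" for v
    using assms by (intro pd_prod) auto
  have e2: "pd v (\<lambda>z. \<Prod>b\<in>B. g b z) z = (\<Sum>b\<in>B. pd v (g b) z * (\<Prod>b'\<in>B-{b}. g b' z))" for v
    using assms by (intro pd_prod) auto
  have "pbracket N (\<lambda>z. \<Prod>a\<in>A. f a z) (\<lambda>z. \<Prod>b\<in>B. g b z) z
    = (\<Sum>k\<in>KN N. \<Sum>l\<in>(UNIV::bool set). \<Sum>a\<in>A. \<Sum>b\<in>B. 
        pd (Qv k l) (f a) z * (\<Prod>a'\<in>A-{a}. f a' z) * (pd (Pv k l) (g b) z * (\<Prod>b'\<in>B-{b}. g b' z))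
      - pd (Pv k l) (f a) z * (\<Prod>a'\<in>A-{a}. f a' z) * (pd (Qv k l) (g b) z * (\<Prod>b'\<in>B-{b}. g b' z)))"
    unfolding pbracket_def e1 e2 sum_product sum_subtractf[symmetric] by (rule refl)
  also have "\<dots> = (\<Sum>k\<in>KN N. \<Sum>l\<in>(UNIV::bool set). \<Sum>a\<in>A. \<Sum>b\<in>B. 
        (pd (Qv k l) (f a) z * pd (Pv k l) (g b) z - pd (Pv k l) (f a) z * pd (Qv k l) (g b) z)
         * (\<Prod>a'\<in>A-{a}. f a' z) * (\<Prod>b'\<in>B-{b}. g b' z))"
    by (intro sum.cong refl) (simp add: algebra_simps)
  also have "\<dots> = (\<Sum>a\<in>A. \<Sum>b\<in>B. pbracket N (f a) (g b) z * (\<Prod>a'\<in>A-{a}. f a' z) * (\<Prod>b'\<in>B-{b}. g b' z))"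
    unfolding pbracket_def sum_distrib_right by (rule swap4)
  finally show ?thesis .
qed


lemma KN_span: "N \<ge> 1 \<Longrightarrow> KN_hi N = KN_lo N + int N - 1"
  unfolding KN_hi_def KN_lo_def
proof -
  have "(- int N) div 2 = - ((int N + 1) div 2)" by linarith
  then show "int N div 2 = (- int N) div 2 + 1 + int N - 1" by linarith
qed

lemma red_in: assumes "N \<ge> 1" shows "red N k \<in> KN N"
proof -
  have "0 \<le> (k - KN_lo N) mod int N" "(k - KN_lo N) mod int N < int N" using assms by auto
  then show ?thesis unfolding red_def KN_def using KN_span[OF assms] by auto
qed

lemma red_id: assumes "N \<ge> 1" "k \<in> KN N" shows "red N k = k"
proof -
  have "0 \<le> k - KN_lo N" "k - KN_lo N < int N" using assms KN_span[OF assms(1)] unfolding KN_def by auto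
  then have "(k - KN_lo N) mod int N = k - KN_lo N" by (rule mod_pos_pos_trivial)
  then show ?thesis unfolding red_def by simp
qed

lemma red_mod: "red N k mod int N = k mod int N"
  unfolding red_def by (simp add: mod_simps)

lemma red_cong: "a mod int N = b mod int N \<Longrightarrow> red N a = red N b"
  unfolding red_def by (metis mod_diff_left_eq)

lemma KN_eq_mod: "N \<ge> 1 \<Longrightarrow> k \<in> KN N \<Longrightarrow> k' \<in> KN N \<Longrightarrow> k mod int N = k' mod int N \<Longrightarrow> k = k'"
  using red_cong red_id by metis

lemma red_eq_iff: "red N a = red N b \<longleftrightarrow> a mod int N = b mod int N"
  using red_cong red_mod by metis

lemma Delta_mod: assumes "N \<ge> 1" "a mod int N = b mod int N"
  shows "Delta m1 m2 N a = Delta m1 m2 N b"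
proof -
  define j where "j = a div int N - b div int N"
  have j: "a = b + j * int N"
  proof -
    have e1: "a = a div int N * int N + a mod int N" "b = b div int N * int N + b mod int N" by simp_all
    show ?thesis unfolding j_def left_diff_distrib using e1 assms(2) by linarith
  qed
  have "2 * pi * real_of_int a / real N = 2 * pi * real_of_int b / real N + (2*pi) * of_int j"
    using assms(1) by (simp add: j field_simps)
  then have "cos (2 * pi * real_of_int a / real N) = cos (2 * pi * real_of_int b / real N)"
    by (simp add: cos_add)
  then show ?thesis unfolding Delta_def by simp
qed

lemma Delta_neg: "Delta m1 m2 N (-a) = Delta m1 m2 N a"
  unfolding Delta_def by simp

lemma omega_red_neg: "N \<ge> 1 \<Longrightarrow> omega K m1 m2 N l (red N (-k)) = omega K m1 m2 N l k"
proof -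
  assume N: "N \<ge> 1"
  have "Delta m1 m2 N (red N (-k)) = Delta m1 m2 N (-k)"
    using N by (intro Delta_mod) (auto simp: red_mod)
  then show ?thesis unfolding omega_def using Delta_neg by simp
qed


definition phi :: "real \<Rightarrow> real \<Rightarrow> real \<Rightarrow> nat \<Rightarrow> bool \<Rightarrow> bool \<Rightarrow> int \<Rightarrow> point \<Rightarrow> complex" where
  "phi K m1 m2 N \<sigma> l k = (if \<sigma> then xi K m1 m2 N l k else eta K m1 m2 N l k)"

lemma lin2: "(\<lambda>z::point. (z w1 + c * z w2) / d) = (\<lambda>z. (1/d) * z w1 + (c/d) * z w2)"
  by (auto simp: field_simps add_divide_distrib)

lemma lin2': "(\<lambda>z::point. (z w1 - c * z w2) / d) = (\<lambda>z. (1/d) * z w1 + (-c/d) * z w2)"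
  by (auto simp: field_simps diff_divide_distrib)

lemma pd_lin2: "pd v (\<lambda>z. a * z w1 + b * z w2) z = a * (if v = w1 then 1 else 0) + b * (if v = w2 then 1 else 0)"
  by (subst pd_add) (auto intro: hol_cmult simp: pd_cmult pd_coord)

lemma hol_lin2: "hol (\<lambda>z. a * z w1 + b * z w2)"
  by (auto intro!: hol_add hol_cmult)

lemma xi_eq: "xi K m1 m2 N l k = (\<lambda>z. (1/complex_of_real (sqrt 2)) * z (Pv k l) +
    (\<i> * complex_of_real (omega K m1 m2 N l k) / complex_of_real (sqrt 2)) * z (Qv (red N (- k)) l))"
  unfolding xi_def[abs_def] lin2 ..

lemma eta_eq: "eta K m1 m2 N l k = (\<lambda>z. (1/complex_of_real (sqrt 2)) * z (Pv (red N (- k)) l) +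
    (- (\<i> * complex_of_real (omega K m1 m2 N l k)) / complex_of_real (sqrt 2)) * z (Qv k l))"
  unfolding eta_def[abs_def] lin2' ..

lemma hol_phi: "hol (phi K m1 m2 N \<sigma> l k)"
  unfolding phi_def xi_eq eta_eq by (cases \<sigma>) (simp_all only: if_True if_False hol_lin2)

lemma finite_KN[simp]: "finite (KN N)" by (simp add: KN_def)

definition bb :: "real \<Rightarrow> real \<Rightarrow> real \<Rightarrow> nat \<Rightarrow> bool \<Rightarrow> bool \<Rightarrow> int \<Rightarrow> bool \<Rightarrow> bool \<Rightarrow> int \<Rightarrow> complex" where
  "bb K m1 m2 N \<sigma> l k \<sigma>' l' k' = (if \<sigma> \<noteq> \<sigma>' \<and> l = l' \<and> k = k' then
      (if \<sigma> then 1 else -1) * \<i> * complex_of_real (omega K m1 m2 N l k) else 0)"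

lemma sum_ind2:
  "(\<Sum>k0\<in>KN N. \<Sum>l0\<in>(UNIV::bool set). (if k0 = a \<and> l0 = b then X else 0) * (if k0 = c \<and> l0 = d then Y else 0))
   = (if a = c \<and> b = d \<and> a \<in> KN N then X * Y else (0::complex))"
proof -
  have "(\<Sum>k0\<in>KN N. \<Sum>l0\<in>(UNIV::bool set). (if k0 = a \<and> l0 = b then X else 0) * (if k0 = c \<and> l0 = d then Y else 0))
    = (\<Sum>k0\<in>KN N. if k0 = a then (if a = c \<and> b = d then X * Y else 0) else 0)"
    by (rule sum.cong) (auto simp: UNIV_bool)
  also have "\<dots> = (if a = c \<and> b = d \<and> a \<in> KN N then X * Y else (0::complex))"
    by (auto simp: sum.delta)
  finally show ?thesis .
qed


lemma neg_mod_iff: assumes "N \<ge> 1" "k \<in> KN N" "k' \<in> KN N"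
  shows "((-k) mod int N = (-k') mod int N) = (k = k')"
proof
  assume "(-k) mod int N = (-k') mod int N"
  then have "(- (-k)) mod int N = (- (-k')) mod int N" by (rule mod_minus_cong)
  then show "k = k'" using KN_eq_mod assms by simp
qed simp

lemma red_neg_swap: assumes "N \<ge> 1" "k \<in> KN N" "k' \<in> KN N"
  shows "(red N (-k) = k') = (k = red N (-k'))"
proof
  assume h: "red N (-k) = k'"
  have "k' mod int N = (-k) mod int N" using h red_mod[of N "-k"] by simp
  then have "(-k') mod int N = (- (-k)) mod int N" by (rule mod_minus_cong)
  then have "red N (-k') = red N k" by (intro red_cong) simp
  then show "k = red N (-k')" using red_id assms by simp
next
  assume h: "k = red N (-k')"
  have "k mod int N = (-k') mod int N" using h red_mod[of N "-k'"] by simp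
  then have "(-k) mod int N = (- (-k')) mod int N" by (rule mod_minus_cong)
  then have "red N (-k) = red N k'" by (intro red_cong) simp
  then show "red N (-k) = k'" using red_id assms by simp
qed

lemma pdP_xi: "pd (Pv k0 l0) (xi K m1 m2 N l k) z = (if k0 = k \<and> l0 = l then 1/complex_of_real (sqrt 2) else 0)"
  unfolding xi_eq pd_lin2 by auto
lemma pdQ_xi: "pd (Qv k0 l0) (xi K m1 m2 N l k) z = (if k0 = red N (-k) \<and> l0 = l then
   \<i> * complex_of_real (omega K m1 m2 N l k) / complex_of_real (sqrt 2) else 0)"
  unfolding xi_eq pd_lin2 by auto
lemma pdP_eta: "pd (Pv k0 l0) (eta K m1 m2 N l k) z = (if k0 = red N (-k) \<and> l0 = l then 1/complex_of_real (sqrt 2) else 0)"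
  unfolding eta_eq pd_lin2 by auto
lemma pdQ_eta: "pd (Qv k0 l0) (eta K m1 m2 N l k) z = (if k0 = k \<and> l0 = l then
   - (\<i> * complex_of_real (omega K m1 m2 N l k)) / complex_of_real (sqrt 2) else 0)"
  unfolding eta_eq pd_lin2 by auto

lemma c2sq: "(1 / complex_of_real (sqrt 2)) * (c / complex_of_real (sqrt 2)) = c / 2"
  "(c / complex_of_real (sqrt 2)) * (1 / complex_of_real (sqrt 2)) = c / 2"
proof -
  have "complex_of_real (sqrt 2) * complex_of_real (sqrt 2) = 2"
    by (simp flip: of_real_mult)
  then show "(1 / complex_of_real (sqrt 2)) * (c / complex_of_real (sqrt 2)) = c / 2"
    "(c / complex_of_real (sqrt 2)) * (1 / complex_of_real (sqrt 2)) = c / 2"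
    by (simp_all add: field_simps)
qed


lemma c2: "complex_of_real (sqrt 2) * complex_of_real (sqrt 2) = 2"
  by (simp flip: of_real_mult)

lemma pb_phi: assumes N: "N \<ge> 1" and k: "k \<in> KN N" and k': "k' \<in> KN N"
  shows "pbracket N (phi K m1 m2 N \<sigma> l k) (phi K m1 m2 N \<sigma>' l' k') z = bb K m1 m2 N \<sigma> l k \<sigma>' l' k'"
proof -
  have r1: "red N (-k) \<in> KN N" "red N (-k') \<in> KN N" using red_in N by auto
  have rr: "(red N (-k) = red N (-k')) = (k = k')"
    using red_eq_iff neg_mod_iff N k k' by blast
  have rs: "(red N (-k) = k') = (k = red N (-k'))" using red_neg_swap N k k' by blast
  have om: "k = red N (-k') \<Longrightarrow> omega K m1 m2 N l' k = omega K m1 m2 N l' k'"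
    using omega_red_neg N by blast
  show ?thesis
  proof (cases \<sigma>; cases \<sigma>')
    assume "\<sigma>" "\<sigma>'" then show ?thesis
    unfolding pbracket_def sum_subtractf phi_def bb_def
    apply (simp only: if_True if_False pdP_xi pdQ_xi pdP_eta pdQ_eta sum_ind2)
    apply (simp add: r1 k k' rr rs om c2sq c2 omega_red_neg[OF N])
    done
  next
    assume "\<sigma>" "\<not>\<sigma>'" then show ?thesis
    unfolding pbracket_def sum_subtractf phi_def bb_def
    apply (simp only: if_True if_False pdP_xi pdQ_xi pdP_eta pdQ_eta sum_ind2)
    apply (simp add: r1 k k' rr rs om c2sq c2 omega_red_neg[OF N])
    done
  next
    assume "\<not>\<sigma>" "\<sigma>'" then show ?thesis
    unfolding pbracket_def sum_subtractf phi_def bb_def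
    apply (simp only: if_True if_False pdP_xi pdQ_xi pdP_eta pdQ_eta sum_ind2)
    apply (simp add: r1 k k' rr rs om c2sq c2 omega_red_neg[OF N])
    done
  next
    assume "\<not>\<sigma>" "\<not>\<sigma>'" then show ?thesis
    unfolding pbracket_def sum_subtractf phi_def bb_def
    apply (simp only: if_True if_False pdP_xi pdQ_xi pdP_eta pdQ_eta sum_ind2)
    apply (simp add: r1 k k' rr rs om c2sq c2 omega_red_neg[OF N])
    done
  qed
qed


definition sh :: "nat \<Rightarrow> nat \<Rightarrow> nat" where "sh j t = (if t < j then t else Suc t)"
definition delx :: "nat \<Rightarrow> nat \<Rightarrow> (nat \<Rightarrow> 'a) \<Rightarrow> nat \<Rightarrow> 'a" where
  "delx s j a t = (if t < s - 1 then a (sh j t) else undefined)"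
definition join :: "nat \<Rightarrow> nat \<Rightarrow> (nat \<Rightarrow> 'a) \<Rightarrow> (nat \<Rightarrow> 'a) \<Rightarrow> nat \<Rightarrow> 'a" where
  "join p q a b t = (if t < p then a t else if t < p + q then b (t - p) else undefined)"

lemma sh_bij: assumes "j < s" shows "bij_betw (sh j) {..<s-1} ({..<s}-{j})"
  unfolding bij_betw_def
proof
  show "inj_on (sh j) {..<s - 1}" unfolding inj_on_def sh_def by auto
  show "sh j ` {..<s - 1} = {..<s} - {j}"
  proof
    show "sh j ` {..<s - 1} \<subseteq> {..<s} - {j}" using assms unfolding sh_def by auto
  next
    show "{..<s} - {j} \<subseteq> sh j ` {..<s - 1}"
    proof
      fix t assume t: "t \<in> {..<s} - {j}"
      show "t \<in> sh j ` {..<s - 1}"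
      proof (cases "t < j")
        case True
        then have "sh j t = t" "t < s - 1" using assms by (auto simp: sh_def)
        then show ?thesis by (metis image_eqI lessThan_iff)
      next
        case False
        then have "sh j (t - 1) = t" "t - 1 < s - 1" using t by (auto simp: sh_def)
        then show ?thesis by (metis image_eqI lessThan_iff)
      qed
    qed
  qed
qed

lemma prod_del: "j < s \<Longrightarrow> (\<Prod>t\<in>{..<s}-{j}. G t) = (\<Prod>t<s-1. G (sh j t))"
  using prod.reindex_bij_betw[OF sh_bij, of j s G] by simp

lemma sum_del: "j < s \<Longrightarrow> (\<Sum>t<s. G t) = G j + (\<Sum>t<s-1. G (sh j t))"
  using sum.reindex_bij_betw[OF sh_bij, of j s G] sum.remove[of "{..<s}" j G] by simp

lemma prod_join: "(\<Prod>t<p+q. G (join p q a b t)) = (\<Prod>t<p. G (a t)) * (\<Prod>t<q. G (b t))"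
proof -
  have "(\<Prod>t<p+q. G (join p q a b t)) = (\<Prod>t<p. G (join p q a b t)) * (\<Prod>t\<in>{p..<p+q}. G (join p q a b t))"
    by (metis add.commute lessThan_atLeast0 prod.atLeastLessThan_concat le_add2 zero_le)
  also have "(\<Prod>t<p. G (join p q a b t)) = (\<Prod>t<p. G (a t))"
    by (rule prod.cong) (auto simp: join_def)
  also have "(\<Prod>t\<in>{p..<p+q}. G (join p q a b t)) = (\<Prod>t<q. G (b t))"
  proof -
    have "(\<Prod>t\<in>{p..<p+q}. G (join p q a b t)) = (\<Prod>t\<in>{0+p..<q+p}. G (join p q a b t))" by (simp add: add.commute)
    also have "\<dots> = (\<Prod>t\<in>{0..<q}. G (join p q a b (t + p)))" by (rule prod.shift_bounds_nat_ivl)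
    also have "\<dots> = (\<Prod>t<q. G (b t))" by (rule prod.cong) (auto simp: join_def)
    finally show ?thesis .
  qed
  finally show ?thesis .
qed

lemma sum_join: "(\<Sum>t<p+q. G (join p q a b t)) = (\<Sum>t<p. G (a t)) + (\<Sum>t<q. G (b t))"
proof -
  have "(\<Sum>t<p+q. G (join p q a b t)) = (\<Sum>t<p. G (join p q a b t)) + (\<Sum>t\<in>{p..<p+q}. G (join p q a b t))"
    by (metis add.commute lessThan_atLeast0 sum.atLeastLessThan_concat le_add2 zero_le)
  also have "(\<Sum>t<p. G (join p q a b t)) = (\<Sum>t<p. G (a t))"
    by (rule sum.cong) (auto simp: join_def)
  also have "(\<Sum>t\<in>{p..<p+q}. G (join p q a b t)) = (\<Sum>t<q. G (b t))"
  proof -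
    have "(\<Sum>t\<in>{p..<p+q}. G (join p q a b t)) = (\<Sum>t\<in>{0+p..<q+p}. G (join p q a b t))" by (simp add: add.commute)
    also have "\<dots> = (\<Sum>t\<in>{0..<q}. G (join p q a b (t + p)))" by (rule sum.shift_bounds_nat_ivl)
    also have "\<dots> = (\<Sum>t<q. G (b t))" by (rule sum.cong) (auto simp: join_def)
    finally show ?thesis .
  qed
  finally show ?thesis .
qed

lemma join_PiE: "(\<And>t. t < p \<Longrightarrow> a t \<in> A) \<Longrightarrow> (\<And>t. t < q \<Longrightarrow> b t \<in> A) \<Longrightarrow> join p q a b \<in> {..<p+q} \<rightarrow>\<^sub>E A"
  unfolding join_def by (auto simp: PiE_iff extensional_def)

lemma delx_in: "a \<in> {..<s} \<rightarrow>\<^sub>E A \<Longrightarrow> j < s \<Longrightarrow> t < s - 1 \<Longrightarrow> delx s j a t \<in> A"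
  unfolding delx_def sh_def by (auto simp: PiE_iff)

lemma join_inj1: "join p q a b = join p q a' b' \<Longrightarrow> t < p \<Longrightarrow> a t = a' t"
  unfolding join_def by (metis)
lemma join_inj2: assumes "join p q a b = join p q a' b'" "t < q" shows "b t = b' t"
proof -
  have "join p q a b (t + p) = join p q a' b' (t + p)" using assms by simp
  then show ?thesis using assms unfolding join_def by simp
qed

lemma recover: assumes "a \<in> {..<s} \<rightarrow>\<^sub>E A" "a' \<in> {..<s} \<rightarrow>\<^sub>E A" "j < s" "a j = a' j"
  "\<And>t. t < s - 1 \<Longrightarrow> a (sh j t) = a' (sh j t)" shows "a = a'"
proof
  fix t show "a t = a' t"
  proof (cases "t < s")
    case False then show ?thesis using assms(1,2) by (auto simp: PiE_iff extensional_def)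
  next
    case True
    show ?thesis
    proof (cases "t = j")
      case False
      then have "t \<in> sh j ` {..<s-1}" using sh_bij[OF assms(3)] True unfolding bij_betw_def by auto
      then show ?thesis using assms(5) by auto
    qed (use assms in simp)
  qed
qed


definition sg :: "bool \<Rightarrow> int" where "sg b = (if b then 1 else -1)"

lemma tdot_sg: "tdot s \<tau> k = (\<Sum>j<s. sg (\<tau> j) * k j)"
  unfolding tdot_def sg_def ..

lemma sg_sq[simp]: "sg b * sg b = 1" unfolding sg_def by simp

lemma KN_bounds: assumes "N \<ge> 1" "k \<in> KN N" shows "2 * k \<le> int N" "- int N < 2 * k"
proof -
  have "KN_lo N \<le> k" "k \<le> KN_hi N" using assms unfolding KN_def by auto
  then show "2 * k \<le> int N" "- int N < 2 * k" unfolding KN_lo_def KN_hi_def by linarith+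
qed

lemma sg_bound: assumes "N \<ge> 1" "k \<in> KN N" shows "2 * (sg b * k) \<le> int N"
  "2 * (sg b * k) = int N \<Longrightarrow> b \<and> 2 * k = int N" "- int N \<le> 2 * (sg b * k)"
  using KN_bounds[OF assms] unfolding sg_def by (cases b; auto)+

lemma nlo_eq: "nlo m = - (int m div 2)"
proof -
  have "nlo m = \<lfloor>real_of_int (1 - int m) / real_of_int 2\<rfloor>" unfolding nlo_def by (simp add: field_simps)
  also have "\<dots> = (1 - int m) div 2" by (rule floor_divide_of_int_eq)
  finally show ?thesis by linarith
qed

lemma nhi_eq: "nhi m = (int m - 1) div 2"
proof -
  have "nhi m = \<lfloor>real_of_int (int m - 1) / real_of_int 2\<rfloor>" unfolding nhi_def by simp
  also have "\<dots> = (int m - 1) div 2" by (rule floor_divide_of_int_eq)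
  finally show ?thesis .
qed

lemma range_lemma:
  assumes N: "N \<ge> 1" and m: "m \<ge> 1" and k: "k \<in> {..<m} \<rightarrow>\<^sub>E KN N" and c: "tdot m \<tau> k = c * int N"
  shows "nlo m \<le> c" "c \<le> nhi m + 1" "c > nhi m \<Longrightarrow> \<tau> 0 \<and> 2 * k 0 = int N"
proof -
  have kj: "k j \<in> KN N" if "j < m" for j using k that by auto
  have up: "2 * (c * int N) \<le> int m * int N"
  proof -
    have "2 * (c * int N) = 2 * tdot m \<tau> k" using c by simp
    also have "\<dots> = (\<Sum>j<m. 2 * (sg (\<tau> j) * k j))" unfolding tdot_sg by (simp add: sum_distrib_left)
    also have "\<dots> \<le> (\<Sum>j<m. int N)" by (rule sum_mono) (use sg_bound(1)[OF N kj] in auto)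
    finally show ?thesis by simp
  qed
  have lo: "- (int m * int N) \<le> 2 * (c * int N)"
  proof -
    have "- (int m * int N) = (\<Sum>j<m. - int N)" by simp
    also have "\<dots> \<le> (\<Sum>j<m. 2 * (sg (\<tau> j) * k j))" by (rule sum_mono) (use sg_bound(3)[OF N kj] in auto)
    also have "\<dots> = 2 * tdot m \<tau> k" unfolding tdot_sg by (simp add: sum_distrib_left)
    also have "\<dots> = 2 * (c * int N)" using c by simp
    finally show ?thesis .
  qed
  have Np: "int N > 0" using N by simp
  have up2: "2 * c \<le> int m" using up Np by (simp add: mult.assoc[symmetric])
  have lo2: "- int m \<le> 2 * c" using lo Np
    by (metis minus_mult_left mult.assoc mult_le_cancel_right_pos)
  show "nlo m \<le> c" unfolding nlo_eq using lo2 by linarith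
  show "c \<le> nhi m + 1" unfolding nhi_eq using up2 by linarith
  assume "c > nhi m"
  then have eq: "2 * c = int m" using up2 unfolding nhi_eq by linarith
  have "(\<Sum>j<m. int N - 2 * (sg (\<tau> j) * k j)) = 0"
  proof -
    have "(\<Sum>j<m. int N - 2 * (sg (\<tau> j) * k j)) = int m * int N - 2 * tdot m \<tau> k"
      unfolding tdot_sg by (simp add: sum_subtractf sum_distrib_left)
    also have "\<dots> = 0" using c eq by (simp add: algebra_simps)
    finally show ?thesis .
  qed
  then have "\<forall>j\<in>{..<m}. int N - 2 * (sg (\<tau> j) * k j) = 0"
    by (subst sum_nonneg_eq_0_iff[symmetric]) (use sg_bound(1)[OF N kj] in auto)
  moreover have "(0::nat) \<in> {..<m}" using m by simp
  ultimately have "2 * (sg (\<tau> 0) * k 0) = int N" by fastforce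
  then show "\<tau> 0 \<and> 2 * k 0 = int N" using sg_bound(2)[OF N kj] m by auto
qed

lemma tdot_upd0: assumes "m \<ge> 1"
  shows "tdot m (\<tau>(0 := b)) k = tdot m \<tau> k - sg (\<tau> 0) * k 0 + sg b * k 0"
proof -
  have "tdot m (\<tau>(0 := b)) k = sg b * k 0 + (\<Sum>j<m-1. sg (\<tau> (Suc j)) * k (Suc j))"
    unfolding tdot_sg using sum_del[of 0 m "\<lambda>j. sg ((\<tau>(0:=b)) j) * k j"] assms by (simp add: sh_def)
  moreover have "tdot m \<tau> k = sg (\<tau> 0) * k 0 + (\<Sum>j<m-1. sg (\<tau> (Suc j)) * k (Suc j))"
    unfolding tdot_sg using sum_del[of 0 m "\<lambda>j. sg (\<tau> j) * k j"] assms by (simp add: sh_def)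
  ultimately show ?thesis by simp
qed

definition reloc :: "nat \<Rightarrow> nat \<Rightarrow> (nat \<Rightarrow> bool) \<Rightarrow> (nat \<Rightarrow> int) \<Rightarrow> nat \<Rightarrow> bool" where
  "reloc m N \<tau> k = (if tdot m \<tau> k div int N > nhi m then \<tau>(0 := \<not> \<tau> 0) else \<tau>)"

lemma reloc_ok:
  assumes N: "N \<ge> 1" and m: "m \<ge> 1" and k: "k \<in> {..<m} \<rightarrow>\<^sub>E KN N" and c: "tdot m \<tau> k = c * int N"
  shows "tdot m (reloc m N \<tau> k) k = (tdot m (reloc m N \<tau> k) k div int N) * int N"
    "nlo m \<le> tdot m (reloc m N \<tau> k) k div int N" "tdot m (reloc m N \<tau> k) k div int N \<le> nhi m"
proof -
  have Np: "int N > 0" using N by simp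
  have cd: "tdot m \<tau> k div int N = c" using c Np by simp
  note R = range_lemma[OF N m k c]
  have "tdot m (reloc m N \<tau> k) k = (tdot m (reloc m N \<tau> k) k div int N) * int N
     \<and> nlo m \<le> tdot m (reloc m N \<tau> k) k div int N \<and> tdot m (reloc m N \<tau> k) k div int N \<le> nhi m"
  proof (cases "c > nhi m")
    case True
    then have t0: "\<tau> 0" "2 * k 0 = int N" using R(3) by auto
    have "tdot m (\<tau>(0 := False)) k = c * int N - int N"
      using tdot_upd0[OF m, of \<tau> False k] t0 c by (simp add: sg_def)
    then have "tdot m (reloc m N \<tau> k) k = (c - 1) * int N"
      unfolding reloc_def cd using True t0 by (simp add: algebra_simps)
    moreover have "nhi m \<ge> nlo m" unfolding nhi_eq nlo_eq using m by presburger
    ultimately show ?thesis using True R Np by simp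
  next
    case False
    then show ?thesis unfolding reloc_def cd using c R Np by simp
  qed
  then show "tdot m (reloc m N \<tau> k) k = (tdot m (reloc m N \<tau> k) k div int N) * int N"
    "nlo m \<le> tdot m (reloc m N \<tau> k) k div int N" "tdot m (reloc m N \<tau> k) k div int N \<le> nhi m" by auto
qed


type_synonym idx = "(nat \<Rightarrow> bool) \<times> (nat \<Rightarrow> bool) \<times> (nat \<Rightarrow> int) \<times> (nat \<Rightarrow> bool) \<times> int"

definition IS :: "nat \<Rightarrow> nat \<Rightarrow> idx set" where
  "IS N s = signs s \<times> signs s \<times> ktuples N s \<times> signs s \<times> {nlo s .. nhi s}"

definition scal :: "nat \<Rightarrow> nat \<Rightarrow> complex" where
  "scal N s = complex_of_real (real N powr (- (real s - 2) / 2))"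

definition cF :: "nat \<Rightarrow> nat \<Rightarrow> coeffs \<Rightarrow> idx \<Rightarrow> complex" where
  "cF N s F = (\<lambda>(\<sigma>,\<tau>,k,l,n). F \<sigma> \<tau> l n (kvec N s k) * complex_of_real (delta_n N n (tdot s \<tau> k)))"

definition XO :: "real \<Rightarrow> real \<Rightarrow> real \<Rightarrow> nat \<Rightarrow> nat \<Rightarrow> idx \<Rightarrow> point \<Rightarrow> complex" where
  "XO K m1 m2 N s = (\<lambda>(\<sigma>,\<tau>,k,l,n). Xi K m1 m2 N s \<sigma> k l)"

lemma finite_IS[simp]: "finite (IS N s)"
  unfolding IS_def signs_def ktuples_def by (intro finite_cartesian_product finite_PiE) auto

lemma polyP_alt: "polyP K m1 m2 N s F = (\<lambda>z. \<Sum>x\<in>IS N s. (scal N s * cF N s F x) * XO K m1 m2 N s x z)"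
proof
  fix z
  show "polyP K m1 m2 N s F z = (\<Sum>x\<in>IS N s. (scal N s * cF N s F x) * XO K m1 m2 N s x z)"
    unfolding polyP_def IS_def cF_def XO_def scal_def
    apply (simp add: sum.cartesian_product sum_distrib_left ac_simps)
    apply (rule sum.cong[OF refl])
    apply (clarsimp simp: ac_simps)
    done
qed

lemma Xi_prod: "Xi K m1 m2 N s \<sigma> k l = (\<lambda>z. \<Prod>j<s. phi K m1 m2 N (\<sigma> j) (l j) (k j) z)"
  unfolding Xi_def phi_def by (rule ext) (rule prod.cong, auto)

lemma hol_XO: "hol (XO K m1 m2 N s x)"
  unfolding XO_def by (cases x) (simp add: Xi_prod hol_prod hol_phi)

lemma bracket_expand:
  "pbracket N (polyP K m1 m2 N s F) (polyP K m1 m2 N r G) z =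
   (\<Sum>o1\<in>IS N s. \<Sum>o2\<in>IS N r. (scal N s * cF N s F o1) * (scal N r * cF N r G o2) *
       pbracket N (XO K m1 m2 N s o1) (XO K m1 m2 N r o2) z)"
  unfolding polyP_alt by (rule pb_bilin) (auto simp: hol_XO)


type_synonym pidx = "idx \<times> idx \<times> nat \<times> nat"

definition outm :: "nat \<Rightarrow> nat \<Rightarrow> nat \<Rightarrow> pidx \<Rightarrow> idx" where
  "outm N s r = (\<lambda>((\<sigma>,\<tau>,k,l,n),(\<sigma>',\<tau>',k',l',n'),j,i).
     let m = r + s - 2;
         kk = join (s-1) (r-1) (delx s j k) (delx r i k');
         t0 = join (s-1) (r-1) (\<lambda>t. (\<tau> j = \<tau>' i) \<noteq> \<tau> (sh j t)) (delx r i \<tau>');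
         tt = reloc m N t0 kk
     in (join (s-1) (r-1) (delx s j \<sigma>) (delx r i \<sigma>'), tt, kk,
         join (s-1) (r-1) (delx s j l) (delx r i l'), tdot m tt kk div int N))"

definition Wt :: "real \<Rightarrow> real \<Rightarrow> real \<Rightarrow> nat \<Rightarrow> nat \<Rightarrow> nat \<Rightarrow> coeffs \<Rightarrow> coeffs \<Rightarrow> pidx \<Rightarrow> complex" where
  "Wt K m1 m2 N s r F G = (\<lambda>((\<sigma>,\<tau>,k,l,n),(\<sigma>',\<tau>',k',l',n'),j,i).
     cF N s F (\<sigma>,\<tau>,k,l,n) * cF N r G (\<sigma>',\<tau>',k',l',n') *
     bb K m1 m2 N (\<sigma> j) (l j) (k j) (\<sigma>' i) (l' i) (k' i))"

definition PS :: "nat \<Rightarrow> nat \<Rightarrow> nat \<Rightarrow> pidx set" where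
  "PS N s r = IS N s \<times> IS N r \<times> {..<s} \<times> {..<r}"

lemma finite_PS[simp]: "finite (PS N s r)" unfolding PS_def by (intro finite_cartesian_product) auto

lemma prod_split: fixes p q :: nat shows "(\<Prod>t<p+q. H t) = (\<Prod>t<p. H t) * (\<Prod>t<q. H (t + p))"
proof -
  have "(\<Prod>t<p+q. H t) = (\<Prod>t<p. H t) * (\<Prod>t\<in>{p..<p+q}. H t)"
    using prod.atLeastLessThan_concat[where m=0 and n=p and p="p+q" and g=H] by (simp add: lessThan_atLeast0)
  also have "(\<Prod>t\<in>{p..<p+q}. H t) = (\<Prod>t\<in>{0+p..<q+p}. H t)" by (simp add: add.commute)
  also have "\<dots> = (\<Prod>t\<in>{0..<q}. H (t + p))" by (rule prod.shift_bounds_nat_ivl)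
  finally show ?thesis by (simp add: lessThan_atLeast0)
qed

lemma XO_outm:
  assumes s: "s \<ge> 1" and r: "r \<ge> 1" and j: "j < s" and i: "i < r"
  shows "XO K m1 m2 N (r+s-2) (outm N s r ((\<sigma>,\<tau>,k,l,n),(\<sigma>',\<tau>',k',l',n'),j,i)) z =
    (\<Prod>t\<in>{..<s}-{j}. phi K m1 m2 N (\<sigma> t) (l t) (k t) z) * (\<Prod>t\<in>{..<r}-{i}. phi K m1 m2 N (\<sigma>' t) (l' t) (k' t) z)"
proof -
  have m: "r + s - 2 = (s-1) + (r-1)" using s r by simp
  let ?J = "\<lambda>a b. join (s-1) (r-1) a b"
  have "XO K m1 m2 N (r+s-2) (outm N s r ((\<sigma>,\<tau>,k,l,n),(\<sigma>',\<tau>',k',l',n'),j,i)) z =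
     (\<Prod>t<(s-1)+(r-1). phi K m1 m2 N (?J (delx s j \<sigma>) (delx r i \<sigma>') t) (?J (delx s j l) (delx r i l') t)
         (?J (delx s j k) (delx r i k') t) z)"
    unfolding XO_def outm_def Let_def m by (simp add: Xi_prod)
  also have "\<dots> = (\<Prod>t<s-1. phi K m1 m2 N (\<sigma> (sh j t)) (l (sh j t)) (k (sh j t)) z) *
                   (\<Prod>t<r-1. phi K m1 m2 N (\<sigma>' (sh i t)) (l' (sh i t)) (k' (sh i t)) z)"
    unfolding prod_split
    by (intro arg_cong2[where f="(*)"] prod.cong refl) (auto simp: join_def delx_def)
  also have "\<dots> = (\<Prod>t\<in>{..<s}-{j}. phi K m1 m2 N (\<sigma> t) (l t) (k t) z) * (\<Prod>t\<in>{..<r}-{i}. phi K m1 m2 N (\<sigma>' t) (l' t) (k' t) z)"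
    unfolding prod_del[OF j] prod_del[OF i] ..
  finally show ?thesis .
qed

lemma XO_bracket:
  assumes N: "N \<ge> 1" and s: "s \<ge> 1" and r: "r \<ge> 1" and o1: "(\<sigma>,\<tau>,k,l,n) \<in> IS N s" and o2: "(\<sigma>',\<tau>',k',l',n') \<in> IS N r"
  shows "pbracket N (XO K m1 m2 N s (\<sigma>,\<tau>,k,l,n)) (XO K m1 m2 N r (\<sigma>',\<tau>',k',l',n')) z =
    (\<Sum>j<s. \<Sum>i<r. bb K m1 m2 N (\<sigma> j) (l j) (k j) (\<sigma>' i) (l' i) (k' i) *
        XO K m1 m2 N (r+s-2) (outm N s r ((\<sigma>,\<tau>,k,l,n),(\<sigma>',\<tau>',k',l',n'),j,i)) z)"
proof -
  have kin: "k j \<in> KN N" if "j < s" for j using o1 that unfolding IS_def ktuples_def by auto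
  have kin': "k' i \<in> KN N" if "i < r" for i using o2 that unfolding IS_def ktuples_def by auto
  have "pbracket N (XO K m1 m2 N s (\<sigma>,\<tau>,k,l,n)) (XO K m1 m2 N r (\<sigma>',\<tau>',k',l',n')) z =
    (\<Sum>j<s. \<Sum>i<r. pbracket N (phi K m1 m2 N (\<sigma> j) (l j) (k j)) (phi K m1 m2 N (\<sigma>' i) (l' i) (k' i)) z *
        (\<Prod>t\<in>{..<s}-{j}. phi K m1 m2 N (\<sigma> t) (l t) (k t) z) * (\<Prod>t\<in>{..<r}-{i}. phi K m1 m2 N (\<sigma>' t) (l' t) (k' t) z))"
    unfolding XO_def by (simp add: Xi_prod pb_prod hol_phi)
  also have "\<dots> = (\<Sum>j<s. \<Sum>i<r. bb K m1 m2 N (\<sigma> j) (l j) (k j) (\<sigma>' i) (l' i) (k' i) *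
        XO K m1 m2 N (r+s-2) (outm N s r ((\<sigma>,\<tau>,k,l,n),(\<sigma>',\<tau>',k',l',n'),j,i)) z)"
    by (intro sum.cong refl) (simp add: pb_phi[OF N kin kin'] XO_outm[OF s r] mult.assoc)
  finally show ?thesis .
qed

lemma bracket_P:
  assumes N: "N \<ge> 1" and s: "s \<ge> 1" and r: "r \<ge> 1"
  shows "pbracket N (polyP K m1 m2 N s F) (polyP K m1 m2 N r G) z =
    scal N s * scal N r * (\<Sum>p\<in>PS N s r. Wt K m1 m2 N s r F G p * XO K m1 m2 N (r+s-2) (outm N s r p) z)"
proof -
  have "pbracket N (polyP K m1 m2 N s F) (polyP K m1 m2 N r G) z =
   (\<Sum>o1\<in>IS N s. \<Sum>o2\<in>IS N r. (scal N s * cF N s F o1) * (scal N r * cF N r G o2) *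
       pbracket N (XO K m1 m2 N s o1) (XO K m1 m2 N r o2) z)" by (rule bracket_expand)
  also have "\<dots> = (\<Sum>o1\<in>IS N s. \<Sum>o2\<in>IS N r. \<Sum>j<s. \<Sum>i<r.
     scal N s * scal N r * (Wt K m1 m2 N s r F G (o1,o2,j,i) * XO K m1 m2 N (r+s-2) (outm N s r (o1,o2,j,i)) z))"
  proof (intro sum.cong refl)
    fix o1 o2 assume h: "o1 \<in> IS N s" "o2 \<in> IS N r"
    obtain \<sigma> \<tau> k l n where e1: "o1 = (\<sigma>,\<tau>,k,l,n)" by (cases o1)
    obtain \<sigma>' \<tau>' k' l' n' where e2: "o2 = (\<sigma>',\<tau>',k',l',n')" by (cases o2)
    show "(scal N s * cF N s F o1) * (scal N r * cF N r G o2) * pbracket N (XO K m1 m2 N s o1) (XO K m1 m2 N r o2) z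
      = (\<Sum>j<s. \<Sum>i<r. scal N s * scal N r * (Wt K m1 m2 N s r F G (o1,o2,j,i) * XO K m1 m2 N (r+s-2) (outm N s r (o1,o2,j,i)) z))"
      unfolding e1 e2 XO_bracket[OF N s r h[unfolded e1 e2]] Wt_def
      by (simp add: sum_distrib_left ac_simps)
  qed
  also have "\<dots> = scal N s * scal N r * (\<Sum>p\<in>PS N s r. Wt K m1 m2 N s r F G p * XO K m1 m2 N (r+s-2) (outm N s r p) z)"
    unfolding PS_def sum_distrib_left by (simp add: sum.cartesian_product)
  finally show ?thesis .
qed


lemma delta_n_nz: "delta_n N n j \<noteq> 0 \<Longrightarrow> j = n * int N"
  unfolding delta_n_def by (auto split: if_splits)

lemma cF_nz: "cF N s F (\<sigma>,\<tau>,k,l,n) \<noteq> 0 \<Longrightarrow> tdot s \<tau> k = n * int N"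
  unfolding cF_def using delta_n_nz by fastforce

lemma bb_nz: "bb K m1 m2 N a b c a' b' c' \<noteq> 0 \<Longrightarrow> a' = (\<not> a) \<and> b' = b \<and> c' = c \<and> omega K m1 m2 N b c \<noteq> 0"
  unfolding bb_def by (auto split: if_splits)

lemma Wt_nz:
  assumes "Wt K m1 m2 N s r F G ((\<sigma>,\<tau>,k,l,n),(\<sigma>',\<tau>',k',l',n'),j,i) \<noteq> 0"
  shows "tdot s \<tau> k = n * int N" "tdot r \<tau>' k' = n' * int N" "\<sigma>' i = (\<not> \<sigma> j)" "l' i = l j" "k' i = k j"
    "omega K m1 m2 N (l j) (k j) \<noteq> 0"
  using assms unfolding Wt_def by (auto dest!: cF_nz bb_nz)

lemma sg_sq2[simp]: "sg b * (sg b * x) = (x::int)" unfolding sg_def by simp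

lemma sg_xor: "sg (c \<noteq> b) = - sg c * sg b" unfolding sg_def by auto
lemma sg_eq: "sg (a = b) = sg a * sg b" unfolding sg_def by auto

lemma sum_split: fixes p q :: nat shows "(\<Sum>t<p+q. H t) = (\<Sum>t<p. H t) + (\<Sum>t<q. H (t + p))"
proof -
  have "(\<Sum>t<p+q. H t) = (\<Sum>t<p. H t) + (\<Sum>t\<in>{p..<p+q}. H t)"
    using sum.atLeastLessThan_concat[where m=0 and n=p and p="p+q" and g=H] by (simp add: lessThan_atLeast0)
  also have "(\<Sum>t\<in>{p..<p+q}. H t) = (\<Sum>t\<in>{0+p..<q+p}. H t)" by (simp add: add.commute)
  also have "\<dots> = (\<Sum>t\<in>{0..<q}. H (t + p))" by (rule sum.shift_bounds_nat_ivl)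
  finally show ?thesis by (simp add: lessThan_atLeast0)
qed

lemma tdot_join:
  "tdot (p+q) (join p q ta tb) (join p q ka kb) = (\<Sum>t<p. sg (ta t) * ka t) + (\<Sum>t<q. sg (tb t) * kb t)"
  unfolding tdot_sg sum_split by (intro arg_cong2[where f="(+)"] sum.cong refl) (auto simp: join_def)

lemma tdot_t0:
  assumes s: "s \<ge> 1" and r: "r \<ge> 1" and j: "j < s" and i: "i < r"
    and h1: "tdot s \<tau> k = n * int N" and h2: "tdot r \<tau>' k' = n' * int N" and kk: "k' i = k j"
  shows "tdot (r+s-2) (join (s-1) (r-1) (\<lambda>t. (\<tau> j = \<tau>' i) \<noteq> \<tau> (sh j t)) (delx r i \<tau>'))
           (join (s-1) (r-1) (delx s j k) (delx r i k')) = (n' - sg (\<tau> j) * sg (\<tau>' i) * n) * int N"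
proof -
  have m: "r + s - 2 = (s-1) + (r-1)" using s r by simp
  have A: "(\<Sum>t<s-1. sg (\<tau> (sh j t)) * k (sh j t)) = n * int N - sg (\<tau> j) * k j"
    using h1 sum_del[OF j, of "\<lambda>t. sg (\<tau> t) * k t"] unfolding tdot_sg by simp
  have B: "(\<Sum>t<r-1. sg (\<tau>' (sh i t)) * k' (sh i t)) = n' * int N - sg (\<tau>' i) * k' i"
    using h2 sum_del[OF i, of "\<lambda>t. sg (\<tau>' t) * k' t"] unfolding tdot_sg by simp
  have "tdot (r+s-2) (join (s-1) (r-1) (\<lambda>t. (\<tau> j = \<tau>' i) \<noteq> \<tau> (sh j t)) (delx r i \<tau>'))
           (join (s-1) (r-1) (delx s j k) (delx r i k'))
     = (\<Sum>t<s-1. sg ((\<tau> j = \<tau>' i) \<noteq> \<tau> (sh j t)) * k (sh j t)) + (\<Sum>t<r-1. sg (\<tau>' (sh i t)) * k' (sh i t))"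
    unfolding m tdot_join by (intro arg_cong2[where f="(+)"] sum.cong refl) (auto simp: delx_def)
  also have "(\<Sum>t<s-1. sg ((\<tau> j = \<tau>' i) \<noteq> \<tau> (sh j t)) * k (sh j t))
     = - sg (\<tau> j) * sg (\<tau>' i) * (\<Sum>t<s-1. sg (\<tau> (sh j t)) * k (sh j t))"
    unfolding sg_xor sg_eq sum_distrib_left by (intro sum.cong refl) (simp add: algebra_simps)
  finally show ?thesis unfolding A B kk
    by (simp add: algebra_simps)
qed


definition delta_ok :: "nat \<Rightarrow> nat \<Rightarrow> idx \<Rightarrow> bool" where
  "delta_ok N m = (\<lambda>(\<sigma>,\<tau>,k,l,n). delta_n N n (tdot m \<tau> k) = 1)"

lemma signs_any: "(\<And>t. t < m \<Longrightarrow> True) \<Longrightarrow> f \<in> extensional {..<m} \<Longrightarrow> f \<in> signs m"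
  unfolding signs_def by (auto simp: PiE_iff)

lemma join_signs: "join p q a b \<in> signs (p+q)"
  unfolding signs_def by (rule join_PiE) auto

lemma upd_signs: "\<tau> \<in> signs m \<Longrightarrow> m \<ge> 1 \<Longrightarrow> \<tau>(0 := b) \<in> signs m"
  unfolding signs_def by (auto simp: PiE_iff extensional_def)

lemma reloc_signs: "\<tau> \<in> signs m \<Longrightarrow> m \<ge> 1 \<Longrightarrow> reloc m N \<tau> k \<in> signs m"
  unfolding reloc_def using upd_signs by auto

lemma outm_mem:
  assumes N: "N \<ge> 1" and s: "s \<ge> 1" and r: "r \<ge> 1" and rs: "r + s \<ge> 3"
    and p: "((\<sigma>,\<tau>,k,l,n),(\<sigma>',\<tau>',k',l',n'),j,i) \<in> PS N s r"
    and nz: "Wt K m1 m2 N s r F G ((\<sigma>,\<tau>,k,l,n),(\<sigma>',\<tau>',k',l',n'),j,i) \<noteq> 0"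
  shows "outm N s r ((\<sigma>,\<tau>,k,l,n),(\<sigma>',\<tau>',k',l',n'),j,i) \<in> IS N (r+s-2)
       \<and> delta_ok N (r+s-2) (outm N s r ((\<sigma>,\<tau>,k,l,n),(\<sigma>',\<tau>',k',l',n'),j,i))"
proof -
  define m where "m = r + s - 2"
  have m: "m = (s-1) + (r-1)" "m \<ge> 1" using s r rs unfolding m_def by auto
  note W = Wt_nz[OF nz]
  have j: "j < s" and i: "i < r" and k: "k \<in> {..<s} \<rightarrow>\<^sub>E KN N" and k': "k' \<in> {..<r} \<rightarrow>\<^sub>E KN N"
    using p unfolding PS_def IS_def ktuples_def by auto
  define kk where "kk = join (s-1) (r-1) (delx s j k) (delx r i k')"
  define t0 where "t0 = join (s-1) (r-1) (\<lambda>t. (\<tau> j = \<tau>' i) \<noteq> \<tau> (sh j t)) (delx r i \<tau>')"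
  define tt where "tt = reloc m N t0 kk"
  have kk: "kk \<in> {..<m} \<rightarrow>\<^sub>E KN N" unfolding kk_def m(1)
    by (rule join_PiE) (auto intro: delx_in[OF k j] delx_in[OF k' i])
  have t0: "t0 \<in> signs m" unfolding t0_def m(1) by (rule join_signs)
  have c: "tdot m t0 kk = (n' - sg (\<tau> j) * sg (\<tau>' i) * n) * int N"
    unfolding m_def t0_def kk_def by (rule tdot_t0[OF s r j i W(1) W(2) W(5)])
  note RO = reloc_ok[OF N m(2) kk c]
  have o: "outm N s r ((\<sigma>,\<tau>,k,l,n),(\<sigma>',\<tau>',k',l',n'),j,i) =
     (join (s-1) (r-1) (delx s j \<sigma>) (delx r i \<sigma>'), tt, kk, join (s-1) (r-1) (delx s j l) (delx r i l'),
      tdot m tt kk div int N)"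
    unfolding outm_def Let_def tt_def kk_def t0_def m_def by simp
  show ?thesis unfolding o m_def[symmetric]
  proof
    show "(join (s-1) (r-1) (delx s j \<sigma>) (delx r i \<sigma>'), tt, kk, join (s-1) (r-1) (delx s j l) (delx r i l'),
      tdot m tt kk div int N) \<in> IS N m"
    proof -
      have js: "join (s-1) (r-1) a b \<in> signs m" for a b :: "nat \<Rightarrow> bool"
        using join_signs[of "s-1" "r-1" a b] m(1) by simp
      show ?thesis
        unfolding IS_def ktuples_def using js reloc_signs[OF t0 m(2)] kk RO(2,3)
        by (simp add: tt_def)
    qed
    show "delta_ok N m (join (s-1) (r-1) (delx s j \<sigma>) (delx r i \<sigma>'), tt, kk, join (s-1) (r-1) (delx s j l) (delx r i l'),
      tdot m tt kk div int N)"
      unfolding delta_ok_def delta_n_def using RO(1) by (simp add: tt_def)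
  qed
qed


definition iota :: "nat \<Rightarrow> nat \<Rightarrow> nat \<Rightarrow> pidx \<Rightarrow> nat \<times> nat \<times> bool \<times> bool \<times> bool \<times> bool \<times> bool" where
  "iota N s r = (\<lambda>((\<sigma>,\<tau>,k,l,n),(\<sigma>',\<tau>',k',l',n'),j,i). (j, i, \<sigma> j, l j, \<tau> j, \<tau>' i,
     nhi (r+s-2) < tdot (r+s-2) (join (s-1) (r-1) (\<lambda>t. (\<tau> j = \<tau>' i) \<noteq> \<tau> (sh j t)) (delx r i \<tau>'))
        (join (s-1) (r-1) (delx s j k) (delx r i k')) div int N))"

lemma uniq_k: assumes N: "N \<ge> 1" and a: "a \<in> KN N" and b: "b \<in> KN N"
  and e1: "x * a + c = n * int N" and e2: "x * b + c = n2 * int N" and x: "x = 1 \<or> x = -1"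
  shows "a = b \<and> n = n2"
proof -
  have ab: "\<bar>a - b\<bar> < int N" using a b KN_span[OF N] unfolding KN_def by auto
  have "x * (a - b) = (n - n2) * int N" using e1 e2 by (simp add: algebra_simps)
  then have "\<bar>x * (a - b)\<bar> = \<bar>(n - n2) * int N\<bar>" by simp
  then have "\<bar>x\<bar> * \<bar>a - b\<bar> = \<bar>n - n2\<bar> * int N" by (simp add: abs_mult)
  then have "\<bar>a - b\<bar> = \<bar>n - n2\<bar> * int N" using x by auto
  then have "\<bar>n - n2\<bar> * int N < int N" using ab by simp
  then have "\<bar>n - n2\<bar> * int N < 1 * int N" by simp
  then have "\<bar>n - n2\<bar> < 1" using N by (simp only: mult_less_cancel_right)
  then have "n = n2" by simp
  then show ?thesis using \<open>\<bar>a - b\<bar> = \<bar>n - n2\<bar> * int N\<close> by simp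
qed

lemma delx_eq: "delx s j a t = delx s j b t \<Longrightarrow> t < s - 1 \<Longrightarrow> a (sh j t) = b (sh j t)"
  unfolding delx_def by simp

lemma upd_inv: "f(0 := \<not> f 0) = g(0 := \<not> g 0) \<Longrightarrow> f = (g :: nat \<Rightarrow> bool)"
proof
  fix t assume h: "f(0 := \<not> f 0) = g(0 := \<not> g 0)"
  show "f t = g t"
  proof (cases "t = 0")
    case True
    have "(f(0 := \<not> f 0)) 0 = (g(0 := \<not> g 0)) 0" using h by simp
    then show ?thesis using True by simp
  next
    case False
    have "(f(0 := \<not> f 0)) t = (g(0 := \<not> g 0)) t" using h by simp
    then show ?thesis using False by simp
  qed
qed

lemma reloc_inj: assumes "reloc m N t0 kk = reloc m N t0' kk'"
  and "(nhi m < tdot m t0 kk div int N) = (nhi m < tdot m t0' kk' div int N)"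
  shows "t0 = t0'"
  using assms unfolding reloc_def by (auto split: if_splits intro: upd_inv)

lemma sg_pm: "sg b = 1 \<or> sg b = -1" unfolding sg_def by auto

lemma join1_sh: "join p q (delx s j a) b = join p q (delx s j a') b' \<Longrightarrow> t < s - 1 \<Longrightarrow> p = s - 1 \<Longrightarrow> a (sh j t) = a' (sh j t)"
  using join_inj1[of p q "delx s j a" b "delx s j a'" b' t] delx_eq by blast

lemma join2_sh: "join p q a (delx r i b) = join p q a' (delx r i b') \<Longrightarrow> t < r - 1 \<Longrightarrow> q = r - 1 \<Longrightarrow> b (sh i t) = b' (sh i t)"
  using join_inj2[of p q a "delx r i b" a' "delx r i b'" t] delx_eq by blast

lemma fiber_inj:
  assumes N: "N \<ge> 1" and s: "s \<ge> 1" and r: "r \<ge> 1"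
    and p: "((\<sigma>,\<tau>,k,l,n),(\<sigma>',\<tau>',k',l',n'),j,i) \<in> PS N s r"
    and q: "((\<sigma>b,\<tau>b,kb,lb,nb),(\<sigma>b',\<tau>b',kb',lb',nb'),jb,ib) \<in> PS N s r"
    and nzp: "Wt K m1 m2 N s r F G ((\<sigma>,\<tau>,k,l,n),(\<sigma>',\<tau>',k',l',n'),j,i) \<noteq> 0"
    and nzq: "Wt K m1 m2 N s r F G ((\<sigma>b,\<tau>b,kb,lb,nb),(\<sigma>b',\<tau>b',kb',lb',nb'),jb,ib) \<noteq> 0"
    and eo: "outm N s r ((\<sigma>,\<tau>,k,l,n),(\<sigma>',\<tau>',k',l',n'),j,i) = outm N s r ((\<sigma>b,\<tau>b,kb,lb,nb),(\<sigma>b',\<tau>b',kb',lb',nb'),jb,ib)"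
    and ei: "iota N s r ((\<sigma>,\<tau>,k,l,n),(\<sigma>',\<tau>',k',l',n'),j,i) = iota N s r ((\<sigma>b,\<tau>b,kb,lb,nb),(\<sigma>b',\<tau>b',kb',lb',nb'),jb,ib)"
  shows "((\<sigma>,\<tau>,k,l,n),(\<sigma>',\<tau>',k',l',n'),j,i) = ((\<sigma>b,\<tau>b,kb,lb,nb),(\<sigma>b',\<tau>b',kb',lb',nb'),jb,ib)"
proof -
  define m where "m = r + s - 2"
  note WP = Wt_nz[OF nzp] and WQ = Wt_nz[OF nzq]
  have j: "j < s" and i: "i < r" and k: "k \<in> {..<s} \<rightarrow>\<^sub>E KN N" and k': "k' \<in> {..<r} \<rightarrow>\<^sub>E KN N"
    and sp: "\<sigma> \<in> {..<s} \<rightarrow>\<^sub>E (UNIV::bool set)" "\<tau> \<in> {..<s} \<rightarrow>\<^sub>E (UNIV::bool set)" "l \<in> {..<s} \<rightarrow>\<^sub>E (UNIV::bool set)" "\<sigma>' \<in> {..<r} \<rightarrow>\<^sub>E (UNIV::bool set)" "\<tau>' \<in> {..<r} \<rightarrow>\<^sub>E (UNIV::bool set)" "l' \<in> {..<r} \<rightarrow>\<^sub>E (UNIV::bool set)"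
    using p unfolding PS_def IS_def ktuples_def signs_def by auto
  have kb: "kb \<in> {..<s} \<rightarrow>\<^sub>E KN N" and kb': "kb' \<in> {..<r} \<rightarrow>\<^sub>E KN N"
    and sq: "\<sigma>b \<in> {..<s} \<rightarrow>\<^sub>E (UNIV::bool set)" "\<tau>b \<in> {..<s} \<rightarrow>\<^sub>E (UNIV::bool set)" "lb \<in> {..<s} \<rightarrow>\<^sub>E (UNIV::bool set)" "\<sigma>b' \<in> {..<r} \<rightarrow>\<^sub>E (UNIV::bool set)" "\<tau>b' \<in> {..<r} \<rightarrow>\<^sub>E (UNIV::bool set)" "lb' \<in> {..<r} \<rightarrow>\<^sub>E (UNIV::bool set)"
    using q unfolding PS_def IS_def ktuples_def signs_def by auto
  have I: "jb = j" "ib = i" "\<sigma>b j = \<sigma> j" "lb j = l j" "\<tau>b j = \<tau> j" "\<tau>b' i = \<tau>' i"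
    using ei unfolding iota_def by auto
  have eo2: "join (s-1) (r-1) (delx s j \<sigma>) (delx r i \<sigma>') = join (s-1) (r-1) (delx s j \<sigma>b) (delx r i \<sigma>b') \<and>
    reloc (r+s-2) N (join (s-1) (r-1) (\<lambda>t. (\<tau> j = \<tau>' i) \<noteq> \<tau> (sh j t)) (delx r i \<tau>')) (join (s-1) (r-1) (delx s j k) (delx r i k'))
   = reloc (r+s-2) N (join (s-1) (r-1) (\<lambda>t. (\<tau> j = \<tau>' i) \<noteq> \<tau>b (sh j t)) (delx r i \<tau>b')) (join (s-1) (r-1) (delx s j kb) (delx r i kb')) \<and>
    join (s-1) (r-1) (delx s j k) (delx r i k') = join (s-1) (r-1) (delx s j kb) (delx r i kb') \<and>
    join (s-1) (r-1) (delx s j l) (delx r i l') = join (s-1) (r-1) (delx s j lb) (delx r i lb') \<and> True"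
    using eo unfolding outm_def Let_def prod.case prod.inject I by blast
  have flag: "(nhi (r+s-2) < tdot (r+s-2) (join (s-1) (r-1) (\<lambda>t. (\<tau> j = \<tau>' i) \<noteq> \<tau> (sh j t)) (delx r i \<tau>'))
        (join (s-1) (r-1) (delx s j k) (delx r i k')) div int N) =
      (nhi (r+s-2) < tdot (r+s-2) (join (s-1) (r-1) (\<lambda>t. (\<tau> j = \<tau>' i) \<noteq> \<tau>b (sh j t)) (delx r i \<tau>b'))
        (join (s-1) (r-1) (delx s j kb) (delx r i kb')) div int N)"
    using ei unfolding iota_def prod.case prod.inject I by blast
  have O: "join (s-1) (r-1) (delx s j \<sigma>) (delx r i \<sigma>') = join (s-1) (r-1) (delx s j \<sigma>b) (delx r i \<sigma>b')"
    "reloc (r+s-2) N (join (s-1) (r-1) (\<lambda>t. (\<tau> j = \<tau>' i) \<noteq> \<tau> (sh j t)) (delx r i \<tau>')) (join (s-1) (r-1) (delx s j k) (delx r i k'))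
   = reloc (r+s-2) N (join (s-1) (r-1) (\<lambda>t. (\<tau> j = \<tau>' i) \<noteq> \<tau>b (sh j t)) (delx r i \<tau>b')) (join (s-1) (r-1) (delx s j kb) (delx r i kb'))"
    "join (s-1) (r-1) (delx s j k) (delx r i k') = join (s-1) (r-1) (delx s j kb) (delx r i kb')"
    "join (s-1) (r-1) (delx s j l) (delx r i l') = join (s-1) (r-1) (delx s j lb) (delx r i lb')"
    using eo2 by blast+
  have t0: "join (s-1) (r-1) (\<lambda>t. (\<tau> j = \<tau>' i) \<noteq> \<tau> (sh j t)) (delx r i \<tau>')
     = join (s-1) (r-1) (\<lambda>t. (\<tau> j = \<tau>' i) \<noteq> \<tau>b (sh j t)) (delx r i \<tau>b')"
    using reloc_inj[OF O(2) flag] .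
  have tau: "\<tau> = \<tau>b"
  proof (rule recover[OF sp(2) sq(2) j])
    show "\<tau> j = \<tau>b j" using I by simp
    fix t assume "t < s - 1"
    then have "((\<tau> j = \<tau>' i) \<noteq> \<tau> (sh j t)) = ((\<tau> j = \<tau>' i) \<noteq> \<tau>b (sh j t))"
      using join_inj1[OF t0] by blast
    then show "\<tau> (sh j t) = \<tau>b (sh j t)" using I by auto
  qed
  have tau': "\<tau>' = \<tau>b'"
    by (rule recover[OF sp(5) sq(5) i _ join2_sh[OF t0 _ refl]]) (use I in simp)
  have sig: "\<sigma> = \<sigma>b"
    by (rule recover[OF sp(1) sq(1) j _ join1_sh[OF O(1) _ refl]]) (use I in simp)
  have sig': "\<sigma>' = \<sigma>b'"
    by (rule recover[OF sp(4) sq(4) i _ join2_sh[OF O(1) _ refl]]) (use I WP(3) WQ(3) in simp)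
  have ll: "l = lb"
    by (rule recover[OF sp(3) sq(3) j _ join1_sh[OF O(4) _ refl]]) (use I in simp)
  have ll': "l' = lb'"
    by (rule recover[OF sp(6) sq(6) i _ join2_sh[OF O(4) _ refl]]) (use I WP(4) WQ(4) in simp)
  have ksh: "k (sh j t) = kb (sh j t)" if "t < s - 1" for t
    using join1_sh[OF O(3) that refl] .
  have ksh': "k' (sh i t) = kb' (sh i t)" if "t < r - 1" for t
    using join2_sh[OF O(3) that refl] .
  define A where "A = (\<Sum>t<s-1. sg (\<tau> (sh j t)) * k (sh j t))"
  have e1: "sg (\<tau> j) * k j + A = n * int N"
    using WP(1) sum_del[OF j, of "\<lambda>t. sg (\<tau> t) * k t"] unfolding tdot_sg A_def by simp
  have "A = (\<Sum>t<s-1. sg (\<tau>b (sh j t)) * kb (sh j t))" unfolding A_def tau by (intro sum.cong refl) (simp add: ksh)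
  then have e2: "sg (\<tau> j) * kb j + A = nb * int N"
    using WQ(1) sum_del[OF j, of "\<lambda>t. sg (\<tau>b t) * kb t"] unfolding tdot_sg I by (simp add: tau)
  have kj: "k j = kb j \<and> n = nb"
    using uniq_k[OF N _ _ e1 e2 sg_pm] k kb j by auto
  have kk: "k = kb" by (rule recover[OF k kb j]) (use kj ksh in auto)
  have kk': "k' = kb'"
    by (rule recover[OF k' kb' i]) (use I WP(5) WQ(5) kj ksh' in auto)
  have "n' * int N = nb' * int N" using WP(2) WQ(2) tau' kk' by (simp only:)
  then have nn': "n' = nb'" using N by simp
  show ?thesis using I sig sig' tau tau' kk kk' ll ll' kj nn' by simp
qed


lemma Delta_bounds: assumes "m1 > 0" "m2 > 0"
  shows "0 \<le> Delta m1 m2 N k" "Delta m1 m2 N k \<le> (m1 + m2)\<^sup>2"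
proof -
  let ?c = "cos (2 * pi * real_of_int k / real N)"
  have c: "-1 \<le> ?c" "?c \<le> 1" by auto
  have p: "m1 * m2 > 0" using assms by simp
  have "Delta m1 m2 N k = m1\<^sup>2 + m2\<^sup>2 + 2 * (m1 * m2) * ?c" unfolding Delta_def by simp
  moreover have "2 * (m1 * m2) * ?c \<ge> 2 * (m1 * m2) * (-1)" using c p by (intro mult_left_mono) auto
  moreover have "2 * (m1 * m2) * ?c \<le> 2 * (m1 * m2) * 1" using c p by (intro mult_left_mono) auto
  moreover have "m1\<^sup>2 + m2\<^sup>2 - 2 * (m1 * m2) \<ge> 0"
  proof -
    have "(m1 - m2)\<^sup>2 \<ge> 0" by simp
    then show ?thesis by (simp add: power2_eq_square algebra_simps)
  qed
  ultimately show "0 \<le> Delta m1 m2 N k" "Delta m1 m2 N k \<le> (m1 + m2)\<^sup>2"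
    by (simp_all add: power2_eq_square algebra_simps)
qed

lemma lin_help: fixes b y :: real shows "0 \<le> y \<Longrightarrow> y \<le> b \<Longrightarrow> 0 \<le> b + y \<and> b + y \<le> 2 * b \<and> 0 \<le> b - y \<and> b - y \<le> 2 * b"
  by linarith

lemma omega_bounds: assumes "m1 > 0" "m2 > 0" "K > 0"
  shows "0 \<le> omega K m1 m2 N l k" "omega K m1 m2 N l k \<le> sqrt (2 * K * (m1 + m2) / (m1 * m2))"
proof -
  have d: "0 \<le> sqrt (Delta m1 m2 N k)" "sqrt (Delta m1 m2 N k) \<le> m1 + m2"
    using Delta_bounds[OF assms(1,2)] assms real_sqrt_le_mono[of "Delta m1 m2 N k" "(m1+m2)\<^sup>2"] by auto
  define a where "a = m1 + m2 + (if l then 1 else -1) * sqrt (Delta m1 m2 N k)"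
  have a0: "0 \<le> a \<and> a \<le> 2 * (m1 + m2)"
  proof (cases l)
    case True
    then have "a = m1 + m2 + sqrt (Delta m1 m2 N k)" by (simp add: a_def)
    then show ?thesis using lin_help[OF d] by simp
  next
    case False
    then have "a = m1 + m2 - sqrt (Delta m1 m2 N k)" by (simp add: a_def)
    then show ?thesis using lin_help[OF d] by simp
  qed
  then have a: "0 \<le> a" "a \<le> 2 * (m1 + m2)" by auto
  have p: "m1 * m2 > 0" using assms by simp
  have "0 \<le> K * a / (m1 * m2)" using a p assms by simp
  moreover have "K * a / (m1 * m2) \<le> 2 * K * (m1 + m2) / (m1 * m2)"
    using a p assms by (intro divide_right_mono) auto
  ultimately show "0 \<le> omega K m1 m2 N l k" "omega K m1 m2 N l k \<le> sqrt (2 * K * (m1 + m2) / (m1 * m2))"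
    unfolding omega_def a_def[symmetric] by (simp_all add: real_sqrt_le_mono)
qed

lemma omega_F0: assumes "m1 > 0" "m2 > 0" shows "omega K m1 m2 N False 0 = 0"
proof -
  have "Delta m1 m2 N 0 = (m1 + m2)\<^sup>2" unfolding Delta_def by (simp add: power2_eq_square algebra_simps)
  then have "sqrt (Delta m1 m2 N 0) = m1 + m2" using assms by simp
  then show ?thesis unfolding omega_def by simp
qed

lemma bb_bound: assumes "m1 > 0" "m2 > 0" "K > 0"
  shows "cmod (bb K m1 m2 N a b c a' b' c') \<le> sqrt (2 * K * (m1 + m2) / (m1 * m2))"
proof -
  have "0 \<le> sqrt (2 * K * (m1 + m2) / (m1 * m2))" using omega_bounds[OF assms, of N b c] by linarith
  then show ?thesis using omega_bounds[OF assms, of N b c] unfolding bb_def by (auto simp: norm_mult)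
qed

lemma cF_bound: assumes "x \<in> IS N s" shows "cmod (cF N s F x) \<le> normplus N s F"
proof -
  obtain \<sigma> \<tau> k l n where x: "x = (\<sigma>,\<tau>,k,l,n)" by (cases x)
  have d: "delta_n N n (tdot s \<tau> k) \<ge> 0" unfolding delta_n_def by simp
  have "cmod (cF N s F x) = cmod (F \<sigma> \<tau> l n (kvec N s k)) * delta_n N n (tdot s \<tau> k)"
    unfolding x cF_def using d by (simp add: norm_mult)
  also have "\<dots> \<le> normplus N s F"
    unfolding normplus_def
    apply (rule Max_ge)
     apply (simp add: finite_IS[unfolded IS_def])
    apply (rule insertI2)
    apply (rule image_eqI[where x="(\<sigma>,\<tau>,k,l,n)"])
     apply simp
    using assms x unfolding IS_def by simp
  finally show ?thesis .
qed

lemma normplus_nonneg: "0 \<le> normplus N s F"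
  unfolding normplus_def by (rule Max_ge) (simp_all add: finite_IS[unfolded IS_def])

lemma Wt_bound: assumes "m1 > 0" "m2 > 0" "K > 0" and p: "p \<in> PS N s r"
  shows "cmod (Wt K m1 m2 N s r F G p) \<le> sqrt (2 * K * (m1 + m2) / (m1 * m2)) * normplus N s F * normplus N r G"
proof -
  obtain \<sigma> \<tau> k l n \<sigma>' \<tau>' k' l' n' j i where pe: "p = ((\<sigma>,\<tau>,k,l,n),(\<sigma>',\<tau>',k',l',n'),j,i)"
    by (cases p) auto
  have h: "(\<sigma>,\<tau>,k,l,n) \<in> IS N s" "(\<sigma>',\<tau>',k',l',n') \<in> IS N r" using p pe unfolding PS_def by auto
  have "cmod (Wt K m1 m2 N s r F G p) = cmod (cF N s F (\<sigma>,\<tau>,k,l,n)) * cmod (cF N r G (\<sigma>',\<tau>',k',l',n'))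
     * cmod (bb K m1 m2 N (\<sigma> j) (l j) (k j) (\<sigma>' i) (l' i) (k' i))"
    unfolding pe Wt_def by (simp add: norm_mult)
  also have "\<dots> \<le> normplus N s F * normplus N r G * sqrt (2 * K * (m1 + m2) / (m1 * m2))"
    by (intro mult_mono cF_bound h bb_bound assms normplus_nonneg mult_nonneg_nonneg norm_ge_zero)
  finally show ?thesis by (simp add: ac_simps)
qed


lemma tdot1: "tdot 1 \<tau> k = sg (\<tau> 0) * k 0" unfolding tdot_sg by simp

lemma IS1: "(\<sigma>,\<tau>,k,l,n) \<in> IS N 1 \<Longrightarrow> n = 0"
  unfolding IS_def using nlo_eq[of 1] nhi_eq[of 1] by simp

lemma sg_nz: "sg b * x = 0 \<Longrightarrow> (x::int) = 0" unfolding sg_def by (auto split: if_splits)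

lemma l_true:
  assumes m: "m1 > 0" "m2 > 0" and mn: "min r s = 1"
    and p: "((\<sigma>,\<tau>,k,l,n),(\<sigma>',\<tau>',k',l',n'),j,i) \<in> PS N s r"
    and nz: "Wt K m1 m2 N s r F G ((\<sigma>,\<tau>,k,l,n),(\<sigma>',\<tau>',k',l',n'),j,i) \<noteq> 0"
  shows "l j"
proof -
  note W = Wt_nz[OF nz]
  have ji: "j < s" "i < r" and h: "(\<sigma>,\<tau>,k,l,n) \<in> IS N s" "(\<sigma>',\<tau>',k',l',n') \<in> IS N r"
    using p unfolding PS_def by auto
  have kj: "k j = 0"
  proof (cases "s = 1")
    case True
    then have "n = 0" "j = 0" using IS1 h ji by auto
    then have "sg (\<tau> 0) * k 0 = 0" using W(1) True tdot1 by simp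
    then have "k 0 = 0" by (rule sg_nz)
    then show ?thesis using \<open>j = 0\<close> by simp
  next
    case False
    then have r1: "r = 1" using mn by linarith
    then have "n' = 0" "i = 0" using IS1 h ji by auto
    then have "sg (\<tau>' 0) * k' 0 = 0" using W(2) r1 tdot1 by simp
    then have "k' 0 = 0" by (rule sg_nz)
    then have "k' i = 0" using \<open>i = 0\<close> by simp
    then show ?thesis using W(5) by simp
  qed
  show "l j"
  proof (rule ccontr)
    assume "\<not> l j"
    then show False using W(6) kj omega_F0[OF m] by simp
  qed
qed

definition fiber :: "real \<Rightarrow> real \<Rightarrow> real \<Rightarrow> nat \<Rightarrow> nat \<Rightarrow> nat \<Rightarrow> coeffs \<Rightarrow> coeffs \<Rightarrow> idx \<Rightarrow> pidx set" where
  "fiber K m1 m2 N s r F G x = {p \<in> PS N s r. Wt K m1 m2 N s r F G p \<noteq> 0 \<and> outm N s r p = x}"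

lemma card_fiber:
  assumes N: "N \<ge> 1" and s: "s \<ge> 1" and r: "r \<ge> 1" and m: "m1 > 0" "m2 > 0"
  shows "real (card (fiber K m1 m2 N s r F G x)) \<le> 16 * real r * real s * real (min r s)"
proof -
  define Ls where "Ls = (if min r s = 1 then {True} else (UNIV :: bool set))"
  define D where "D = {..<s} \<times> {..<r} \<times> (UNIV::bool set) \<times> Ls \<times> (UNIV::bool set) \<times> (UNIV::bool set) \<times> (UNIV::bool set)"
  have inj: "inj_on (iota N s r) (fiber K m1 m2 N s r F G x)"
  proof (rule inj_onI)
    fix p q assume hp: "p \<in> fiber K m1 m2 N s r F G x" and hq: "q \<in> fiber K m1 m2 N s r F G x"
      and e: "iota N s r p = iota N s r q"
    obtain \<sigma> \<tau> k l n \<sigma>' \<tau>' k' l' n' j i where pe: "p = ((\<sigma>,\<tau>,k,l,n),(\<sigma>',\<tau>',k',l',n'),j,i)"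
      by (cases p) auto
    obtain \<sigma>b \<tau>b kb lb nb \<sigma>b' \<tau>b' kb' lb' nb' jb ib where qe: "q = ((\<sigma>b,\<tau>b,kb,lb,nb),(\<sigma>b',\<tau>b',kb',lb',nb'),jb,ib)"
      by (cases q) auto
    show "p = q" unfolding pe qe
      by (rule fiber_inj[OF N s r]) (use hp hq e in \<open>auto simp: fiber_def pe qe\<close>)
  qed
  have sub: "iota N s r ` fiber K m1 m2 N s r F G x \<subseteq> D"
  proof
    fix y assume "y \<in> iota N s r ` fiber K m1 m2 N s r F G x"
    then obtain p where hp: "p \<in> fiber K m1 m2 N s r F G x" and y: "y = iota N s r p" by auto
    obtain \<sigma> \<tau> k l n \<sigma>' \<tau>' k' l' n' j i where pe: "p = ((\<sigma>,\<tau>,k,l,n),(\<sigma>',\<tau>',k',l',n'),j,i)"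
      by (cases p) auto
    have pp: "p \<in> PS N s r" "Wt K m1 m2 N s r F G p \<noteq> 0" using hp unfolding fiber_def by auto
    have "j < s" "i < r" using pp pe unfolding PS_def by auto
    moreover have "l j \<in> Ls" unfolding Ls_def using l_true[OF m _ pp[unfolded pe]] by auto
    ultimately show "y \<in> D" unfolding y pe D_def iota_def by simp
  qed
  have cD: "card D = s * r * 2 * card Ls * 2 * 2 * 2"
    unfolding D_def by (simp add: card_cartesian_product card_UNIV_bool)
  have cL: "card Ls \<le> min r s" "card Ls \<le> 2"
    unfolding Ls_def using s r by (auto simp: card_UNIV_bool)
  have "card (fiber K m1 m2 N s r F G x) \<le> card D"
    by (rule card_inj_on_le[OF inj sub]) (simp add: D_def Ls_def)
  also have "\<dots> = 16 * (s * r * card Ls)" unfolding cD by simp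
  also have "\<dots> \<le> 16 * (s * r * min r s)" using cL by simp
  finally have c: "card (fiber K m1 m2 N s r F G x) \<le> 16 * r * s * min r s" by (simp add: ac_simps)
  have "real (card (fiber K m1 m2 N s r F G x)) \<le> real (16 * r * s * min r s)" using c by (simp only: of_nat_le_iff)
  then show ?thesis by (simp only: of_nat_mult of_nat_numeral)
qed


definition bump :: "nat \<Rightarrow> nat \<Rightarrow> (nat \<Rightarrow> int) \<Rightarrow> (nat \<Rightarrow> real) \<Rightarrow> real" where
  "bump N m k0 x = (\<Prod>t<m. max 0 (1 - \<bar>real N * x t - real_of_int (k0 t)\<bar>))"

lemma bump_kvec: assumes N: "N \<ge> 1" and k0: "k0 \<in> ktuples N m" and k: "k \<in> ktuples N m"
  shows "bump N m k0 (kvec N m k) = (if k0 = k then 1 else 0)"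
proof -
  have e: "real N * kvec N m k t = real_of_int (k t)" if "t < m" for t
    using N that unfolding kvec_def by simp
  show ?thesis
  proof (cases "k0 = k")
    case True
    then show ?thesis unfolding bump_def by (simp add: e)
  next
    case False
    then obtain t where t: "t < m" "k0 t \<noteq> k t"
      using k0 k unfolding ktuples_def by (metis PiE_ext lessThan_iff)
    then have i: "(1::int) \<le> \<bar>k t - k0 t\<bar>" by linarith
    have "\<bar>real_of_int (k t) - real_of_int (k0 t)\<bar> = real_of_int \<bar>k t - k0 t\<bar>" by simp
    then have "\<bar>real_of_int (k t) - real_of_int (k0 t)\<bar> \<ge> 1" using i
      by (metis of_int_1_le_iff)
    then have "max 0 (1 - \<bar>real N * kvec N m k t - real_of_int (k0 t)\<bar>) = 0" using e[OF t(1)] by simp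
    then have "bump N m k0 (kvec N m k) = 0" unfolding bump_def
      by (intro prod_zero) (use t in auto)
    then show ?thesis using False by simp
  qed
qed

lemma finite_ktuples[simp]: "finite (ktuples N m)"
  unfolding ktuples_def by (intro finite_PiE) auto

lemma cont_bump: "continuous_on S (bump N m k0)"
  unfolding bump_def
  by (intro continuous_intros continuous_on_product_then_coordinatewise[OF continuous_on_id])

definition Cc :: "real \<Rightarrow> real \<Rightarrow> real \<Rightarrow> nat \<Rightarrow> nat \<Rightarrow> nat \<Rightarrow> coeffs \<Rightarrow> coeffs \<Rightarrow> idx \<Rightarrow> complex" where
  "Cc K m1 m2 N s r F G x = (\<Sum>p\<in>fiber K m1 m2 N s r F G x. Wt K m1 m2 N s r F G p)"

definition HH :: "real \<Rightarrow> real \<Rightarrow> real \<Rightarrow> nat \<Rightarrow> nat \<Rightarrow> nat \<Rightarrow> coeffs \<Rightarrow> coeffs \<Rightarrow> coeffs" where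
  "HH K m1 m2 N s r F G = (\<lambda>\<sigma> \<tau> l n x. \<Sum>k0\<in>ktuples N (r+s-2).
     complex_of_real (bump N (r+s-2) k0 x) * Cc K m1 m2 N s r F G (\<sigma>,\<tau>,k0,l,n))"

lemma HH_cont: "is_coeffs (r+s-2) (HH K m1 m2 N s r F G)"
  unfolding is_coeffs_def HH_def
  by (intro allI continuous_intros cont_bump)

lemma HH_kvec: assumes N: "N \<ge> 1" and k: "k \<in> ktuples N (r+s-2)"
  shows "HH K m1 m2 N s r F G \<sigma> \<tau> l n (kvec N (r+s-2) k) = Cc K m1 m2 N s r F G (\<sigma>,\<tau>,k,l,n)"
proof -
  have "HH K m1 m2 N s r F G \<sigma> \<tau> l n (kvec N (r+s-2) k) =
     (\<Sum>k0\<in>ktuples N (r+s-2). if k0 = k then Cc K m1 m2 N s r F G (\<sigma>,\<tau>,k0,l,n) else 0)"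
    unfolding HH_def by (intro sum.cong refl) (simp add: bump_kvec[OF N _ k])
  also have "\<dots> = Cc K m1 m2 N s r F G (\<sigma>,\<tau>,k,l,n)" using k by (simp add: sum.delta')
  finally show ?thesis .
qed


lemma Cc_delta:
  assumes N: "N \<ge> 1" and s: "s \<ge> 1" and r: "r \<ge> 1" and rs: "r + s \<ge> 3"
  shows "Cc K m1 m2 N s r F G (\<sigma>,\<tau>,k,l,n) * complex_of_real (delta_n N n (tdot (r+s-2) \<tau> k))
       = Cc K m1 m2 N s r F G (\<sigma>,\<tau>,k,l,n)"
proof (cases "fiber K m1 m2 N s r F G (\<sigma>,\<tau>,k,l,n) = {}")
  case True
  then show ?thesis unfolding Cc_def by simp
next
  case False
  then obtain p where p: "p \<in> fiber K m1 m2 N s r F G (\<sigma>,\<tau>,k,l,n)" by blast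
  obtain \<sigma>a \<tau>a ka la na \<sigma>a' \<tau>a' ka' la' na' j i where pe: "p = ((\<sigma>a,\<tau>a,ka,la,na),(\<sigma>a',\<tau>a',ka',la',na'),j,i)"
    by (cases p) auto
  have "p \<in> PS N s r" "Wt K m1 m2 N s r F G p \<noteq> 0" "outm N s r p = (\<sigma>,\<tau>,k,l,n)"
    using p unfolding fiber_def by auto
  then have "delta_ok N (r+s-2) (\<sigma>,\<tau>,k,l,n)"
    using outm_mem[OF N s r rs, of \<sigma>a \<tau>a ka la na \<sigma>a' \<tau>a' ka' la' na' j i] pe by auto
  then show ?thesis unfolding delta_ok_def by simp
qed

lemma scal_mult: assumes N: "N \<ge> 1" and s: "s \<ge> 1" and r: "r \<ge> 1"
  shows "scal N s * scal N r = scal N (r+s-2)"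
proof -
  have e: "real (r + s - 2) = real r + real s - 2" using s r by (simp add: of_nat_diff)
  have "real N powr (- (real s - 2) / 2) * real N powr (- (real r - 2) / 2) = real N powr (- (real (r+s-2) - 2) / 2)"
  proof -
    have x: "- (real s - 2) / 2 + - (real r - 2) / 2 = - (real (r+s-2) - 2) / 2" unfolding e by (simp add: field_simps)
    show ?thesis unfolding powr_add[symmetric] x ..
  qed
  then show ?thesis unfolding scal_def by (simp flip: of_real_mult)
qed

lemma regroup:
  assumes N: "N \<ge> 1" and s: "s \<ge> 1" and r: "r \<ge> 1" and rs: "r + s \<ge> 3"
  shows "(\<Sum>p\<in>PS N s r. Wt K m1 m2 N s r F G p * XO K m1 m2 N (r+s-2) (outm N s r p) z)
       = (\<Sum>x\<in>IS N (r+s-2). Cc K m1 m2 N s r F G x * XO K m1 m2 N (r+s-2) x z)"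
proof -
  define PZ where "PZ = {p \<in> PS N s r. Wt K m1 m2 N s r F G p \<noteq> 0}"
  have fPZ: "finite PZ" unfolding PZ_def by simp
  have img: "outm N s r ` PZ \<subseteq> IS N (r+s-2)"
  proof
    fix y assume "y \<in> outm N s r ` PZ"
    then obtain p where p: "p \<in> PZ" "y = outm N s r p" by auto
    obtain \<sigma>a \<tau>a ka la na \<sigma>a' \<tau>a' ka' la' na' j i where pe: "p = ((\<sigma>a,\<tau>a,ka,la,na),(\<sigma>a',\<tau>a',ka',la',na'),j,i)"
      by (cases p) auto
    show "y \<in> IS N (r+s-2)" using outm_mem[OF N s r rs] p pe unfolding PZ_def by auto
  qed
  have "(\<Sum>p\<in>PS N s r. Wt K m1 m2 N s r F G p * XO K m1 m2 N (r+s-2) (outm N s r p) z)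
      = (\<Sum>p\<in>PZ. Wt K m1 m2 N s r F G p * XO K m1 m2 N (r+s-2) (outm N s r p) z)"
    by (rule sum.mono_neutral_right) (auto simp: PZ_def)
  also have "\<dots> = (\<Sum>x\<in>IS N (r+s-2). \<Sum>p\<in>{p \<in> PZ. outm N s r p = x}. Wt K m1 m2 N s r F G p * XO K m1 m2 N (r+s-2) (outm N s r p) z)"
    by (rule sum.group[symmetric, OF fPZ finite_IS img])
  also have "\<dots> = (\<Sum>x\<in>IS N (r+s-2). Cc K m1 m2 N s r F G x * XO K m1 m2 N (r+s-2) x z)"
  proof (rule sum.cong[OF refl])
    fix x
    have fe: "{p \<in> PZ. outm N s r p = x} = fiber K m1 m2 N s r F G x" unfolding PZ_def fiber_def by auto
    show "(\<Sum>p\<in>{p \<in> PZ. outm N s r p = x}. Wt K m1 m2 N s r F G p * XO K m1 m2 N (r+s-2) (outm N s r p) z)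
      = Cc K m1 m2 N s r F G x * XO K m1 m2 N (r+s-2) x z"
      unfolding fe Cc_def sum_distrib_right by (rule sum.cong) (auto simp: fiber_def)
  qed
  finally show ?thesis .
qed

lemma bracket_final:
  assumes N: "N \<ge> 1" and s: "s \<ge> 1" and r: "r \<ge> 1" and rs: "r + s \<ge> 3"
  shows "pbracket N (polyP K m1 m2 N s F) (polyP K m1 m2 N r G) = polyP K m1 m2 N (r+s-2) (HH K m1 m2 N s r F G)"
proof
  fix z
  have "pbracket N (polyP K m1 m2 N s F) (polyP K m1 m2 N r G) z
     = scal N (r+s-2) * (\<Sum>x\<in>IS N (r+s-2). Cc K m1 m2 N s r F G x * XO K m1 m2 N (r+s-2) x z)"
    unfolding bracket_P[OF N s r] regroup[OF N s r rs] scal_mult[OF N s r] ..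
  also have "\<dots> = (\<Sum>x\<in>IS N (r+s-2). (scal N (r+s-2) * cF N (r+s-2) (HH K m1 m2 N s r F G) x) * XO K m1 m2 N (r+s-2) x z)"
    unfolding sum_distrib_left
  proof (rule sum.cong[OF refl])
    fix x assume x: "x \<in> IS N (r+s-2)"
    obtain \<sigma> \<tau> k l n where xe: "x = (\<sigma>,\<tau>,k,l,n)" by (cases x)
    have k: "k \<in> ktuples N (r+s-2)" using x xe unfolding IS_def by auto
    have "cF N (r+s-2) (HH K m1 m2 N s r F G) x = Cc K m1 m2 N s r F G x"
      unfolding xe cF_def using HH_kvec[OF N k] Cc_delta[OF N s r rs] by simp
    then show "scal N (r+s-2) * (Cc K m1 m2 N s r F G x * XO K m1 m2 N (r+s-2) x z)
       = (scal N (r+s-2) * cF N (r+s-2) (HH K m1 m2 N s r F G) x) * XO K m1 m2 N (r+s-2) x z" by simp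
  qed
  also have "\<dots> = polyP K m1 m2 N (r+s-2) (HH K m1 m2 N s r F G) z"
    unfolding polyP_alt ..
  finally show "pbracket N (polyP K m1 m2 N s F) (polyP K m1 m2 N r G) z = polyP K m1 m2 N (r+s-2) (HH K m1 m2 N s r F G) z" .
qed


lemma Cc_bound:
  assumes N: "N \<ge> 1" and s: "s \<ge> 1" and r: "r \<ge> 1" and m: "m1 > 0" "m2 > 0" "K > 0"
  shows "cmod (Cc K m1 m2 N s r F G x) \<le> 16 * real r * real s * real (min r s) *
     (sqrt (2 * K * (m1 + m2) / (m1 * m2)) * normplus N s F * normplus N r G)"
proof -
  let ?B = "sqrt (2 * K * (m1 + m2) / (m1 * m2)) * normplus N s F * normplus N r G"
  have fin: "finite (fiber K m1 m2 N s r F G x)" unfolding fiber_def by simp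
  have "cmod (Cc K m1 m2 N s r F G x) \<le> (\<Sum>p\<in>fiber K m1 m2 N s r F G x. cmod (Wt K m1 m2 N s r F G p))"
    unfolding Cc_def by (rule norm_sum)
  also have "\<dots> \<le> (\<Sum>p\<in>fiber K m1 m2 N s r F G x. ?B)"
    by (rule sum_mono) (use Wt_bound[OF m] in \<open>auto simp: fiber_def\<close>)
  also have "\<dots> = real (card (fiber K m1 m2 N s r F G x)) * ?B" by simp
  also have "\<dots> \<le> (16 * real r * real s * real (min r s)) * ?B"
  proof (rule mult_right_mono)
    show "real (card (fiber K m1 m2 N s r F G x)) \<le> 16 * real r * real s * real (min r s)"
      by (rule card_fiber[OF N s r m(1,2)])
    show "0 \<le> ?B" by (intro mult_nonneg_nonneg real_sqrt_ge_zero normplus_nonneg) (use m in simp)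
  qed
  finally show ?thesis .
qed

lemma norm_final:
  assumes N: "N \<ge> 1" and s: "s \<ge> 1" and r: "r \<ge> 1" and rs: "r + s \<ge> 3" and m: "m1 > 0" "m2 > 0" "K > 0"
  shows "normplus N (r + s - 2) (HH K m1 m2 N s r F G)
    \<le> 2^4 * sqrt (2 * K * (m1 + m2) / (m1 * m2)) * real r * real s * real (min r s) * normplus N s F * normplus N r G"
proof -
  let ?R = "2^4 * sqrt (2 * K * (m1 + m2) / (m1 * m2)) * real r * real s * real (min r s) * normplus N s F * normplus N r G"
  have eqR: "?R = 16 * real r * real s * real (min r s) *
     (sqrt (2 * K * (m1 + m2) / (m1 * m2)) * normplus N s F * normplus N r G)" by (simp add: ac_simps)
  have R0: "0 \<le> ?R"
    by (intro mult_nonneg_nonneg real_sqrt_ge_zero normplus_nonneg) (use m in simp_all)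
  have elem: "cmod (HH K m1 m2 N s r F G \<sigma> \<tau> l n (kvec N (r+s-2) k)) * delta_n N n (tdot (r+s-2) \<tau> k) \<le> ?R"
    if k: "k \<in> ktuples N (r+s-2)" for \<sigma> \<tau> k l n
  proof -
    have d: "0 \<le> delta_n N n (tdot (r+s-2) \<tau> k)" "delta_n N n (tdot (r+s-2) \<tau> k) \<le> 1"
      unfolding delta_n_def by auto
    have "cmod (HH K m1 m2 N s r F G \<sigma> \<tau> l n (kvec N (r+s-2) k)) * delta_n N n (tdot (r+s-2) \<tau> k)
       = cmod (Cc K m1 m2 N s r F G (\<sigma>,\<tau>,k,l,n)) * delta_n N n (tdot (r+s-2) \<tau> k)"
      using HH_kvec[OF N k] by simp
    also have "\<dots> \<le> cmod (Cc K m1 m2 N s r F G (\<sigma>,\<tau>,k,l,n))"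
      using d by (simp add: mult_left_le)
    also have "\<dots> \<le> ?R" unfolding eqR by (rule Cc_bound[OF N s r m])
    finally show ?thesis .
  qed
  show ?thesis unfolding normplus_def[of N "r+s-2" "HH K m1 m2 N s r F G"]
    apply (rule Max.boundedI)
      apply (simp add: finite_IS[unfolded IS_def])
     apply simp
    using R0 elem by auto
qed

theorem lemma1:
  fixes N r s :: nat and K m1 m2 :: real and F G :: coeffs
  assumes "N \<ge> 1" and "m1 > m2" and "m2 > 0" and "K > 0"
    and "r \<ge> 1" and "s \<ge> 1" and "r + s \<ge> 3"
    and "is_coeffs s F" and "is_coeffs r G"
  shows "\<exists>H. is_coeffs (r + s - 2) H
           \<and> pbracket N (polyP K m1 m2 N s F) (polyP K m1 m2 N r G) = polyP K m1 m2 N (r + s - 2) H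
           \<and> normplus N (r + s - 2) H
               \<le> 2^4 * sqrt (2 * K * (m1 + m2) / (m1 * m2)) * real r * real s * real (min r s)
                   * normplus N s F * normplus N r G"
proof (intro exI conjI)
  have m: "m1 > 0" "m2 > 0" "K > 0" using assms by auto
  show "is_coeffs (r + s - 2) (HH K m1 m2 N s r F G)" by (rule HH_cont)
  show "pbracket N (polyP K m1 m2 N s F) (polyP K m1 m2 N r G) = polyP K m1 m2 N (r + s - 2) (HH K m1 m2 N s r F G)"
    by (rule bracket_final) (use assms in auto)
  show "normplus N (r + s - 2) (HH K m1 m2 N s r F G)
               \<le> 2^4 * sqrt (2 * K * (m1 + m2) / (m1 * m2)) * real r * real s * real (min r s)
                   * normplus N s F * normplus N r G"
    by (rule norm_final) (use assms m in auto)
qed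


end
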